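(* (a) For any two directed graphs $G_1,G_2$ on the same vertex set $V$ (directed cycles allowed), if $D_{sep}(G_1)\subseteq D_{sep}(G_2)$ then $S(G_2)\subseteq S(G_1)$. (b) There exist two directed graphs $G_1,G_2$ on the same vertex set (with directed cycles) such that $S(G_1)=S(G_2)$, $D_{sep}(G_1)\neq D_{sep}(G_2)$ and $D_{sep}(G_1)\subset D_{sep}(G_2)$. For directed acyclic graphs, no two such graphs exist.
   Context: A directed graph $G=(V,E)$ has vertex set $V=\{1,\dots,p\}$ and directed edges $j\to k$ ($j\ne k$); directed cycles are allowed (a DCG), and a DAG is one without directed cycles. $k$ is a child of $j$ if $j\to k$; $k$ is a descendant of $j$ (and $j$ an ancestor of $k$) if there is a directed path $j\to\cdots\to k$. $j,k$ are really adjacent if $j\to k$ or $k\to j$, and virtually adjacent if they have a common child $\ell$ that is an ancestor of $j$ or of $k$. The skeleton $S(G)$ is the set of unordered pairs that are really or virtually adjacent. On an undirected path $\pi$, an interior vertex $b$ is a collider if both path edges at $b$ point into $b$. For $S\subset V\setminus\{j,k\}$, $j$ is d-connected to $k$ given $S$ if there is an undirected path between $j$ and $k$ on which every interior vertex lying in $S$ is a collider and every collider has itself or a descendant in $S$; otherwise $j$ is d-separated from $k$ given $S$. $D_{sep}(G)$ denotes the set of d-separation rules entailed by $G$, i.e. the set of all triples $(j,k,S)$ with $j\neq k$, $S\subset V\setminus\{j,k\}$ and $j$ d-separated from $k$ given $S$ in $G$. *)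

theory Defs
  imports Main
begin

definition digraph :: "nat \<Rightarrow> (nat \<times> nat) set \<Rightarrow> bool" where
  "digraph p E \<longleftrightarrow> E \<subseteq> {1..p} \<times> {1..p} \<and> (\<forall>j. (j, j) \<notin> E)"

definition really_adj :: "(nat \<times> nat) set \<Rightarrow> nat \<Rightarrow> nat \<Rightarrow> bool" where
  "really_adj E j k \<longleftrightarrow> (j, k) \<in> E \<or> (k, j) \<in> E"

definition virtually_adj :: "(nat \<times> nat) set \<Rightarrow> nat \<Rightarrow> nat \<Rightarrow> bool" where
  "virtually_adj E j k \<longleftrightarrow>
     (\<exists>l. (j, l) \<in> E \<and> (k, l) \<in> E \<and> ((l, j) \<in> E\<^sup>* \<or> (l, k) \<in> E\<^sup>*))"

definition skeleton :: "nat \<Rightarrow> (nat \<times> nat) set \<Rightarrow> nat set set" where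
  "skeleton p E = {{j, k} | j k. j \<in> {1..p} \<and> k \<in> {1..p} \<and> j \<noteq> k \<and>
                     (really_adj E j k \<or> virtually_adj E j k)}"

definition upath :: "(nat \<times> nat) set \<Rightarrow> nat list \<Rightarrow> (nat \<times> nat) list \<Rightarrow> bool" where
  "upath E xs es \<longleftrightarrow> xs \<noteq> [] \<and> distinct xs \<and> length es + 1 = length xs \<and>
     (\<forall>i < length es. es ! i \<in> E \<and>
        (es ! i = (xs ! i, xs ! Suc i) \<or> es ! i = (xs ! Suc i, xs ! i)))"

definition collider :: "nat list \<Rightarrow> (nat \<times> nat) list \<Rightarrow> nat \<Rightarrow> bool" where
  "collider xs es i \<longleftrightarrow> es ! (i - 1) = (xs ! (i - 1), xs ! i) \<and> es ! i = (xs ! Suc i, xs ! i)"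

definition d_connected :: "(nat \<times> nat) set \<Rightarrow> nat \<Rightarrow> nat \<Rightarrow> nat set \<Rightarrow> bool" where
  "d_connected E j k S \<longleftrightarrow>
     (\<exists>xs es. upath E xs es \<and> hd xs = j \<and> last xs = k \<and>
        (\<forall>i. 0 < i \<and> i < length es \<longrightarrow>
            (xs ! i \<in> S \<longrightarrow> collider xs es i) \<and>
            (collider xs es i \<longrightarrow> (\<exists>d \<in> S. (xs ! i, d) \<in> E\<^sup>*))))"

definition Dsep :: "nat \<Rightarrow> (nat \<times> nat) set \<Rightarrow> (nat \<times> nat \<times> nat set) set" where
  "Dsep p E = {(j, k, S). j \<in> {1..p} \<and> k \<in> {1..p} \<and> j \<noteq> k \<and>
                 S \<subseteq> {1..p} - {j, k} \<and> \<not> d_connected E j k S}"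

end

theory Submission
  imports Defs
begin

lemma digraph_in: "digraph p E \<Longrightarrow> (a,b)\<in>E \<Longrightarrow> a \<in> {1..p} \<and> b \<in> {1..p} \<and> a \<noteq> b"
  unfolding digraph_def by auto

lemma rtrancl_distinct_path:
  assumes "(a,b) \<in> R\<^sup>*"
  shows "\<exists>xs. xs \<noteq> [] \<and> hd xs = a \<and> last xs = b \<and> distinct xs \<and> successively (\<lambda>u v. (u,v)\<in>R) xs"
  using assms
proof (induction rule: converse_rtrancl_induct)
  case base then show ?case by (intro exI[of _ "[b]"]) auto
next
  case (step a c)
  then obtain xs where xs: "xs \<noteq> []" "hd xs = c" "last xs = b" "distinct xs"
      "successively (\<lambda>u v. (u,v)\<in>R) xs" by blast
  show ?case
  proof (cases "a \<in> set xs")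
    case True
    define ys where "ys = dropWhile (\<lambda>v. v \<noteq> a) xs"
    have split: "xs = takeWhile (\<lambda>v. v \<noteq> a) xs @ ys" by (simp add: ys_def)
    have ne: "ys \<noteq> []" using True by (simp add: ys_def dropWhile_eq_Nil_conv)
    have "hd ys = a" using hd_dropWhile[of "\<lambda>v. v \<noteq> a" xs] ne by (simp add: ys_def)
    moreover have "last ys = b" using xs(3) ne split by (metis last_appendR)
    moreover have "distinct ys" using xs(4) split by (metis distinct_append)
    moreover have "successively (\<lambda>u v. (u,v)\<in>R) ys" using xs(5) split
      by (metis successively_append_iff)
    ultimately show ?thesis using ne by blast
  next
    case False
    then show ?thesis using xs step(1)
      by (intro exI[of _ "a#xs"]) (auto simp: successively_Cons)
  qed
qed

lemma dconn_fw:
  assumes "xs \<noteq> []" "distinct xs" "successively (\<lambda>u v. (u,v)\<in>E) xs"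
    and "\<forall>v\<in>set xs. v \<notin> S \<or> v = hd xs \<or> v = last xs"
  shows "d_connected E (hd xs) (last xs) S"
proof -
  define es where "es = map (\<lambda>i. (xs!i, xs!Suc i)) [0..<length xs - 1]"
  have up: "upath E xs es"
    unfolding upath_def es_def using assms(1,2,3) by (auto simp: successively_conv_nth)
  have nc: "\<not> collider xs es i" if "0 < i" "i < length es" for i
    using that assms(2) unfolding collider_def es_def
    by (auto simp: nth_eq_iff_index_eq)
  have ns: "xs!i \<notin> S" if "0 < i" "i < length es" for i
  proof -
    have "xs!i \<in> set xs" using that by (simp add: es_def)
    moreover have "xs!i \<noteq> hd xs" using that assms(1,2)
      by (simp add: es_def hd_conv_nth nth_eq_iff_index_eq)
    moreover have "xs!i \<noteq> last xs" using that assms(1,2)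
      by (simp add: es_def last_conv_nth nth_eq_iff_index_eq)
    ultimately show ?thesis using assms(4) by blast
  qed
  show ?thesis unfolding d_connected_def using up nc ns by blast
qed

lemma dconn_bw:
  assumes "xs \<noteq> []" "distinct xs" "successively (\<lambda>u v. (v,u)\<in>E) xs"
    and "\<forall>v\<in>set xs. v \<notin> S \<or> v = hd xs \<or> v = last xs"
  shows "d_connected E (hd xs) (last xs) S"
proof -
  define es where "es = map (\<lambda>i. (xs!Suc i, xs!i)) [0..<length xs - 1]"
  have up: "upath E xs es"
    unfolding upath_def es_def using assms(1,2,3) by (auto simp: successively_conv_nth)
  have nc: "\<not> collider xs es i" if "0 < i" "i < length es" for i
  proof
    assume "collider xs es i"
    then have "xs!i = xs!(i-1)" using that unfolding collider_def es_def by auto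
    then show False using that assms(2) by (simp add: es_def nth_eq_iff_index_eq)
  qed
  have ns: "xs!i \<notin> S" if "0 < i" "i < length es" for i
  proof -
    have "xs!i \<in> set xs" using that by (simp add: es_def)
    moreover have "xs!i \<noteq> hd xs" using that assms(1,2)
      by (simp add: es_def hd_conv_nth nth_eq_iff_index_eq)
    moreover have "xs!i \<noteq> last xs" using that assms(1,2)
      by (simp add: es_def last_conv_nth nth_eq_iff_index_eq)
    ultimately show ?thesis using assms(4) by blast
  qed
  show ?thesis unfolding d_connected_def using up nc ns by blast
qed

lemma reach_R:
  assumes "(l,y) \<in> E\<^sup>*" "\<forall>d\<in>S. (l,d) \<notin> E\<^sup>*"
  shows "(l,y) \<in> {(u,v). (u,v) \<in> E \<and> v \<notin> S}\<^sup>*"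
  using assms(1)
proof (induction rule: rtrancl_induct)
  case base then show ?case by simp
next
  case (step y z)
  then have "(l,z) \<in> E\<^sup>*" by simp
  then have "z \<notin> S" using assms(2) by blast
  with step show ?case by (simp add: rtrancl.rtrancl_into_rtrancl)
qed

lemma Rpath_notS:
  assumes "xs \<noteq> []" "successively (\<lambda>u v. (u,v) \<in> {(u,v). (u,v) \<in> E \<and> v \<notin> S}) xs"
  shows "\<forall>v\<in>set xs. v \<notin> S \<or> v = hd xs"
proof
  fix v assume "v \<in> set xs"
  then obtain i where i: "i < length xs" "v = xs!i" by (auto simp: in_set_conv_nth)
  show "v \<notin> S \<or> v = hd xs"
  proof (cases i)
    case 0 then show ?thesis using i assms(1) by (simp add: hd_conv_nth)
  next
    case (Suc m)
    then have "(xs!m, xs!Suc m) \<in> {(u,v). (u,v) \<in> E \<and> v \<notin> S}"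
      using successively_nth[OF assms(2)] i by blast
    then show ?thesis using i Suc by simp
  qed
qed

lemma Rpath_E:
  "successively (\<lambda>u v. (u,v) \<in> {(u,v). (u,v) \<in> E \<and> v \<notin> S}) xs \<Longrightarrow>
   successively (\<lambda>u v. (u,v) \<in> E) xs"
  by (erule successively_mono) auto



lemma adj_dconn:
  assumes dg: "digraph p E" and jk: "j \<noteq> k" and S: "S \<subseteq> {1..p} - {j,k}"
    and adj: "really_adj E j k \<or> virtually_adj E j k"
  shows "d_connected E j k S"
proof -
  have jS: "j \<notin> S" and kS: "k \<notin> S" using S by auto
  show ?thesis
  proof (cases "really_adj E j k")
    case True
    then show ?thesis
    proof (cases "(j,k) \<in> E")
      case True
      then show ?thesis using dconn_fw[of "[j,k]" E S] jk by simp
    next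
      case False
      then have "(k,j) \<in> E" using \<open>really_adj E j k\<close> by (simp add: really_adj_def)
      then show ?thesis using dconn_bw[of "[j,k]" E S] jk by simp
    qed
  next
    case False
    then have "virtually_adj E j k" using adj by simp
    then obtain l where l: "(j,l) \<in> E" "(k,l) \<in> E" "(l,j) \<in> E\<^sup>* \<or> (l,k) \<in> E\<^sup>*"
      unfolding virtually_adj_def by blast
    have lj: "l \<noteq> j" using digraph_in[OF dg l(1)] by simp
    have lk: "l \<noteq> k" using digraph_in[OF dg l(2)] by simp
    show ?thesis
    proof (cases "\<exists>d\<in>S. (l,d) \<in> E\<^sup>*")
      case True
      let ?xs = "[j,l,k]" and ?es = "[(j,l),(k,l)]"
      have ed: "\<forall>i < length ?es. ?es ! i \<in> E \<and> (?es ! i = (?xs ! i, ?xs ! Suc i) \<or> ?es ! i = (?xs ! Suc i, ?xs ! i))"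
      proof (intro allI impI)
        fix i assume "i < length ?es"
        then have "i = 0 \<or> i = 1" by auto
        then show "?es ! i \<in> E \<and> (?es ! i = (?xs ! i, ?xs ! Suc i) \<or> ?es ! i = (?xs ! Suc i, ?xs ! i))"
          using l(1,2) by auto
      qed
      have up: "upath E ?xs ?es" unfolding upath_def using ed lj lk jk by simp
      have "\<forall>i. 0 < i \<and> i < length ?es \<longrightarrow>
            (?xs ! i \<in> S \<longrightarrow> collider ?xs ?es i) \<and>
            (collider ?xs ?es i \<longrightarrow> (\<exists>d \<in> S. (?xs ! i, d) \<in> E\<^sup>*))"
      proof (intro allI impI)
        fix i assume "0 < i \<and> i < length ?es"
        then have "i = 1" by simp
        then show "(?xs ! i \<in> S \<longrightarrow> collider ?xs ?es i) \<and>
            (collider ?xs ?es i \<longrightarrow> (\<exists>d \<in> S. (?xs ! i, d) \<in> E\<^sup>*))"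
          using True by (simp add: collider_def)
      qed
      then show ?thesis unfolding d_connected_def using up by (intro exI[of _ ?xs] exI[of _ ?es]) simp
    next
      case False
      let ?R = "{(u,v). (u,v) \<in> E \<and> v \<notin> S}"
      have lS: "l \<notin> S" using False by blast
      from l(3) show ?thesis
      proof
        assume lj': "(l,j) \<in> E\<^sup>*"
        have "(l,j) \<in> ?R\<^sup>*" using False by (intro reach_R[OF lj']) simp
        moreover have "(k,l) \<in> ?R" using l(2) lS by simp
        ultimately have "(k,j) \<in> ?R\<^sup>*" by (rule converse_rtrancl_into_rtrancl[rotated])
        then obtain xs where xs: "xs \<noteq> []" "hd xs = k" "last xs = j" "distinct xs"
          "successively (\<lambda>u v. (u,v)\<in>?R) xs" using rtrancl_distinct_path[of _ _ ?R] by meson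
        have ns: "\<forall>v\<in>set xs. v \<notin> S \<or> v = hd xs" using Rpath_notS[OF xs(1,5)] .
        have "d_connected E (hd (rev xs)) (last (rev xs)) S"
          apply (rule dconn_bw)
          using xs Rpath_E[OF xs(5)] ns by (auto simp: hd_rev last_rev)
        then show ?thesis using xs by (simp add: hd_rev last_rev)
      next
        assume lk': "(l,k) \<in> E\<^sup>*"
        have "(l,k) \<in> ?R\<^sup>*" using False by (intro reach_R[OF lk']) simp
        moreover have "(j,l) \<in> ?R" using l(1) lS by simp
        ultimately have "(j,k) \<in> ?R\<^sup>*" by (rule converse_rtrancl_into_rtrancl[rotated])
        then obtain xs where xs: "xs \<noteq> []" "hd xs = j" "last xs = k" "distinct xs"
          "successively (\<lambda>u v. (u,v)\<in>?R) xs" using rtrancl_distinct_path[of _ _ ?R] by meson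
        have ns: "\<forall>v\<in>set xs. v \<notin> S \<or> v = hd xs" using Rpath_notS[OF xs(1,5)] .
        have "d_connected E (hd xs) (last xs) S"
          apply (rule dconn_fw)
          using xs Rpath_E[OF xs(5)] ns by auto
        then show ?thesis using xs by simp
      qed
    qed
  qed
qed


definition SepSet :: "nat \<Rightarrow> (nat \<times> nat) set \<Rightarrow> nat \<Rightarrow> nat \<Rightarrow> nat set" where
  "SepSet p E j k = {a \<in> {1..p}. a \<noteq> j \<and> a \<noteq> k \<and> ((a,j) \<in> E\<^sup>* \<or> (a,k) \<in> E\<^sup>*)}"

lemma sep_nonadj:
  assumes dg: "digraph p E" and jk: "j \<noteq> k" and nr: "\<not> really_adj E j k"
    and nv: "\<not> virtually_adj E j k"
  shows "\<not> d_connected E j k (SepSet p E j k)"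
proof
  let ?S = "SepSet p E j k"
  assume "d_connected E j k ?S"
  then obtain xs es where up: "upath E xs es" and h: "hd xs = j" "last xs = k"
    and C: "\<forall>i. 0 < i \<and> i < length es \<longrightarrow> (xs!i \<in> ?S \<longrightarrow> collider xs es i) \<and>
               (collider xs es i \<longrightarrow> (\<exists>d\<in>?S. (xs!i,d) \<in> E\<^sup>*))"
    unfolding d_connected_def by blast
  define n where "n = length es"
  have Ci: "(xs!i \<in> ?S \<longrightarrow> collider xs es i) \<and> (collider xs es i \<longrightarrow> (\<exists>d\<in>?S. (xs!i,d) \<in> E\<^sup>*))"
    if "0 < i" "i < n" for i
    using C that unfolding n_def by simp
  have len: "length xs = Suc n" using up unfolding upath_def n_def by simp
  have ne: "xs \<noteq> []" and dist: "distinct xs" using up unfolding upath_def by auto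
  have x0: "xs!0 = j" using h ne by (simp add: hd_conv_nth)
  have xn: "xs!n = k" using h ne len by (simp add: last_conv_nth)
  have Ed: "\<And>i. i < n \<Longrightarrow> es!i \<in> E \<and> (es!i = (xs!i, xs!Suc i) \<or> es!i = (xs!Suc i, xs!i))"
    using up unfolding upath_def n_def by blast
  define An where "An v \<longleftrightarrow> (v,j) \<in> E\<^sup>* \<or> (v,k) \<in> E\<^sup>*" for v
  have inV: "xs!i \<in> {1..p}" if "i < n" for i
  proof -
    from Ed[OF that] have "(xs!i, xs!Suc i) \<in> E \<or> (xs!Suc i, xs!i) \<in> E" by auto
    then show ?thesis by (auto dest: digraph_in[OF dg])
  qed
  have neq: "xs!i \<noteq> j \<and> xs!i \<noteq> k" if "0 < i" "i < n" for i
    using that dist len by (simp add: x0[symmetric] xn[symmetric] nth_eq_iff_index_eq)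
  have inS: "xs!i \<in> ?S \<longleftrightarrow> An (xs!i)" if "0 < i" "i < n" for i
    using inV[OF that(2)] neq[OF that] unfolding SepSet_def An_def by auto
  have edgeAn: "An u" if "(u,v) \<in> E" "An v" for u v
    using that unfolding An_def by (meson converse_rtrancl_into_rtrancl)
  have colAn: "An (xs!i)" if "0 < i" "i < n" "collider xs es i" for i
  proof -
    have "\<exists>d\<in>?S. (xs!i,d) \<in> E\<^sup>*" using Ci[OF that(1,2)] that(3) by blast
    then obtain d where d: "d \<in> ?S" "(xs!i,d) \<in> E\<^sup>*" by blast
    from d(1) have "(d,j) \<in> E\<^sup>* \<or> (d,k) \<in> E\<^sup>*" by (simp add: SepSet_def)
    then show ?thesis unfolding An_def using rtrancl_trans[OF d(2)] by blast
  qed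
  have colI: "collider xs es i" if "0 < i" "i < n" "An (xs!i)" for i
    using Ci[OF that(1,2)] inS[OF that(1,2)] that(3) by simp
  have right: "\<forall>i. i < n \<longrightarrow> n - i \<le> m \<longrightarrow> es!i = (xs!i, xs!Suc i) \<longrightarrow> An (xs!i)" for m
  proof (induction m)
    case 0 then show ?case by auto
  next
    case (Suc m)
    show ?case
    proof (intro allI impI)
      fix i assume i: "i < n" "n - i \<le> Suc m" and e: "es!i = (xs!i, xs!Suc i)"
      have ed: "(xs!i, xs!Suc i) \<in> E" using Ed[OF i(1)] e by simp
      show "An (xs!i)"
      proof (cases "Suc i = n")
        case True
        then have "An (xs!Suc i)" using xn unfolding An_def by simp
        then show ?thesis using ed edgeAn by blast
      next
        case False
        then have si: "Suc i < n" using i by simp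
        show ?thesis
        proof (cases "collider xs es (Suc i)")
          case True
          then have "An (xs!Suc i)" using colAn si by simp
          then show ?thesis using ed edgeAn by blast
        next
          case False
          then have "es!Suc i \<noteq> (xs!Suc (Suc i), xs!Suc i)" using e unfolding collider_def by simp
          then have "es!Suc i = (xs!Suc i, xs!Suc (Suc i))" using Ed[OF si] by blast
          then have "An (xs!Suc i)" using Suc.IH si i by auto
          then show ?thesis using ed edgeAn by blast
        qed
      qed
    qed
  qed
  have rightA: "An (xs!i)" if "i < n" "es!i = (xs!i, xs!Suc i)" for i
    using right[of n] that by auto
  have n0: "n \<noteq> 0" using x0 xn jk by (cases n) auto
  have n1: "n \<noteq> 1"
  proof
    assume "n = 1"
    then have "es!0 \<in> E \<and> (es!0 = (j,k) \<or> es!0 = (k,j))" using Ed[of 0] x0 xn by simp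
    then show False using nr unfolding really_adj_def by auto
  qed
  then have n2: "2 \<le> n" using n0 by simp
  have A1: "An (xs!1)"
  proof (cases "es!0 = (xs!1, xs!0)")
    case True
    then have "(xs!1, j) \<in> E" using Ed[of 0] n2 x0 by auto
    then show ?thesis unfolding An_def by auto
  next
    case False
    then have e0: "es!0 = (xs!0, xs!1)" using Ed[of 0] n2 by auto
    show ?thesis
    proof (cases "collider xs es 1")
      case True then show ?thesis using colAn n2 by simp
    next
      case False
      then have "es!1 \<noteq> (xs!2, xs!1)" using e0 unfolding collider_def by (simp add: numeral_2_eq_2)
      then have "es!1 = (xs!1, xs!2)" using Ed[of 1] n2 by (auto simp: numeral_2_eq_2)
      then show ?thesis using rightA[of 1] n2 by (simp add: numeral_2_eq_2)
    qed
  qed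
  have c1: "collider xs es 1" using colI[of 1] A1 n2 by simp
  then have e0: "es!0 = (xs!0, xs!1)" and e1: "es!1 = (xs!2, xs!1)"
    unfolding collider_def by (auto simp: numeral_2_eq_2)
  show False
  proof (cases "n = 2")
    case True
    have "(j, xs!1) \<in> E" "(k, xs!1) \<in> E" using Ed[of 0] Ed[of 1] e0 e1 x0 xn True by auto
    then show False using nv A1 unfolding virtually_adj_def An_def by blast
  next
    case False
    then have n3: "2 < n" using n2 by simp
    have "(xs!2, xs!1) \<in> E" using Ed[of 1] e1 n3 by auto
    then have "An (xs!2)" using A1 edgeAn by blast
    then have "collider xs es 2" using colI[of 2] n3 by simp
    then have "es!1 = (xs!1, xs!2)" unfolding collider_def by simp
    then have "xs!1 = xs!2" using e1 by (metis Pair_inject)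
    then show False using dist len n3 by (simp add: nth_eq_iff_index_eq)
  qed
qed

theorem partA:
  "\<forall>p E1 E2. digraph p E1 \<and> digraph p E2 \<and> Dsep p E1 \<subseteq> Dsep p E2
            \<longrightarrow> skeleton p E2 \<subseteq> skeleton p E1"
proof (intro allI impI subsetI)
  fix p E1 E2 s
  assume H: "digraph p E1 \<and> digraph p E2 \<and> Dsep p E1 \<subseteq> Dsep p E2" and s: "s \<in> skeleton p E2"
  then obtain j k where jk: "s = {j,k}" "j \<in> {1..p}" "k \<in> {1..p}" "j \<noteq> k"
    and adj2: "really_adj E2 j k \<or> virtually_adj E2 j k"
    unfolding skeleton_def by blast
  show "s \<in> skeleton p E1"
  proof (cases "really_adj E1 j k \<or> virtually_adj E1 j k")
    case True then show ?thesis using jk unfolding skeleton_def by blast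
  next
    case False
    let ?S = "SepSet p E1 j k"
    have "\<not> d_connected E1 j k ?S" using sep_nonadj[of p E1 j k] H jk False by blast
    moreover have Ssub: "?S \<subseteq> {1..p} - {j,k}" unfolding SepSet_def by auto
    ultimately have "(j,k,?S) \<in> Dsep p E1" using jk unfolding Dsep_def by blast
    then have "(j,k,?S) \<in> Dsep p E2" using H by blast
    then have "\<not> d_connected E2 j k ?S" unfolding Dsep_def by blast
    moreover have "d_connected E2 j k ?S" using adj_dconn[of p E2 j k ?S] H jk adj2 Ssub by blast
    ultimately show ?thesis by blast
  qed
qed


lemma dconn_mono:
  assumes sub: "E \<subseteq> F" and d: "d_connected E j k S"
  shows "d_connected F j k S"
proof -
  obtain xs es where up: "upath E xs es" and h: "hd xs = j" "last xs = k"
    and C: "\<forall>i. 0 < i \<and> i < length es \<longrightarrow> (xs!i \<in> S \<longrightarrow> collider xs es i) \<and>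
               (collider xs es i \<longrightarrow> (\<exists>d\<in>S. (xs!i,d) \<in> E\<^sup>*))"
    using d unfolding d_connected_def by blast
  have up': "upath F xs es" using up sub unfolding upath_def by blast
  have rt: "E\<^sup>* \<subseteq> F\<^sup>*" using sub by (rule rtrancl_mono)
  have C': "\<forall>i. 0 < i \<and> i < length es \<longrightarrow> (xs!i \<in> S \<longrightarrow> collider xs es i) \<and>
               (collider xs es i \<longrightarrow> (\<exists>d\<in>S. (xs!i,d) \<in> F\<^sup>*))"
    using C rt by blast
  show ?thesis unfolding d_connected_def using up' h C' by blast
qed

lemma dsep_mono: "E2 \<subseteq> E1 \<Longrightarrow> Dsep p E1 \<subseteq> Dsep p E2"
  unfolding Dsep_def using dconn_mono[of E2 E1] by blast

lemma skel_mono: "E2 \<subseteq> E1 \<Longrightarrow> skeleton p E2 \<subseteq> skeleton p E1"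
proof
  fix s assume sub: "E2 \<subseteq> E1" and s: "s \<in> skeleton p E2"
  then obtain j k where jk: "s = {j,k}" "j \<in> {1..p}" "k \<in> {1..p}" "j \<noteq> k"
    and adj2: "really_adj E2 j k \<or> virtually_adj E2 j k"
    unfolding skeleton_def by blast
  have "really_adj E1 j k \<or> virtually_adj E1 j k"
    using adj2 sub rtrancl_mono[OF sub] unfolding really_adj_def virtually_adj_def by blast
  then show "s \<in> skeleton p E1" using jk unfolding skeleton_def by blast
qed

lemma no_in_rtrancl: "\<forall>u. (u,b) \<notin> E \<Longrightarrow> (a,b) \<in> E\<^sup>* \<Longrightarrow> a = b"
  by (erule rtranclE) auto

definition Ex2 :: "(nat \<times> nat) set" where "Ex2 = {(1,2),(2,1),(3,2),(4,1)}"
definition Ex1 :: "(nat \<times> nat) set" where "Ex1 = {(1,2),(2,1),(3,2),(4,1),(2,3)}"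

lemma ex_dg: "digraph 4 Ex1" "digraph 4 Ex2"
  unfolding digraph_def Ex1_def Ex2_def by auto

lemma ex_cyc: "\<not> acyclic Ex1"
proof -
  have "(1,2) \<in> Ex1\<^sup>+" "(2,1) \<in> Ex1" unfolding Ex1_def by auto
  then have "(1::nat,1) \<in> Ex1\<^sup>+" by (rule trancl_into_trancl)
  then show ?thesis unfolding acyclic_def by blast
qed

lemma ex_va1: "virtually_adj Ex2 1 3" "virtually_adj Ex2 3 1"
  "virtually_adj Ex2 2 4" "virtually_adj Ex2 4 2"
proof -
  have a: "(2,1) \<in> Ex2\<^sup>*" "(1,2) \<in> Ex2\<^sup>*" unfolding Ex2_def by (auto intro: r_into_rtrancl)
  show "virtually_adj Ex2 1 3" unfolding virtually_adj_def
    using a by (intro exI[of _ 2]) (auto simp: Ex2_def)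
  show "virtually_adj Ex2 3 1" unfolding virtually_adj_def
    using a by (intro exI[of _ 2]) (auto simp: Ex2_def)
  show "virtually_adj Ex2 2 4" unfolding virtually_adj_def
    using a by (intro exI[of _ 1]) (auto simp: Ex2_def)
  show "virtually_adj Ex2 4 2" unfolding virtually_adj_def
    using a by (intro exI[of _ 1]) (auto simp: Ex2_def)
qed

lemma ex_n34: "\<not> really_adj Ex1 3 4" "\<not> virtually_adj Ex1 3 4"
  "\<not> really_adj Ex1 4 3" "\<not> virtually_adj Ex1 4 3"
  unfolding really_adj_def virtually_adj_def Ex1_def by auto

lemma ex_adj2:
  assumes "j \<in> {1..4}" "k \<in> {1..4}" "j \<noteq> k" "\<not> (j = 3 \<and> k = 4)" "\<not> (j = 4 \<and> k = 3)"
  shows "really_adj Ex2 j k \<or> virtually_adj Ex2 j k"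
proof -
  have j: "j = 1 \<or> j = 2 \<or> j = 3 \<or> j = 4" and k: "k = 1 \<or> k = 2 \<or> k = 3 \<or> k = 4"
    using assms(1,2) by auto
  show ?thesis using j k assms(3-5) ex_va1
    by (elim disjE) (simp_all add: really_adj_def Ex2_def)
qed

lemma ex_skel: "skeleton 4 Ex1 = skeleton 4 Ex2"
proof
  show "skeleton 4 Ex2 \<subseteq> skeleton 4 Ex1" by (rule skel_mono) (auto simp: Ex1_def Ex2_def)
next
  show "skeleton 4 Ex1 \<subseteq> skeleton 4 Ex2"
  proof
    fix s assume s: "s \<in> skeleton 4 Ex1"
    then obtain j k where jk: "s = {j,k}" "j \<in> {1..4}" "k \<in> {1..4}" "j \<noteq> k"
      and adj1: "really_adj Ex1 j k \<or> virtually_adj Ex1 j k"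
      unfolding skeleton_def by blast
    have "\<not> (j = 3 \<and> k = 4)" "\<not> (j = 4 \<and> k = 3)" using adj1 ex_n34 by auto
    then have "really_adj Ex2 j k \<or> virtually_adj Ex2 j k" using ex_adj2 jk by blast
    then show "s \<in> skeleton 4 Ex2" using jk unfolding skeleton_def by blast
  qed
qed

lemma ex_conn1: "d_connected Ex1 3 4 {}"
proof -
  let ?xs = "[3,2,1,4::nat]" and ?es = "[(2,3),(1,2),(4,1::nat)]"
  have up: "upath Ex1 ?xs ?es" unfolding upath_def Ex1_def
    by (auto simp: less_Suc_eq nth_Cons')
  show ?thesis unfolding d_connected_def
    apply (rule exI[of _ ?xs], rule exI[of _ ?es])
    using up by (auto simp: collider_def less_Suc_eq nth_Cons')
qed

lemma ex_sep2: "\<not> d_connected Ex2 3 4 {}"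
proof -
  have "SepSet 4 Ex2 3 4 = {}"
  proof -
    have "(a,3) \<in> Ex2\<^sup>* \<Longrightarrow> a = 3" for a by (rule no_in_rtrancl) (auto simp: Ex2_def)
    moreover have "(a,4) \<in> Ex2\<^sup>* \<Longrightarrow> a = 4" for a by (rule no_in_rtrancl) (auto simp: Ex2_def)
    ultimately show ?thesis unfolding SepSet_def by auto
  qed
  moreover have "\<not> really_adj Ex2 3 4" "\<not> virtually_adj Ex2 3 4"
    unfolding really_adj_def virtually_adj_def Ex2_def by auto
  ultimately show ?thesis using sep_nonadj[OF ex_dg(2), of 3 4] by simp
qed

theorem partB:
  "\<exists>p E1 E2. digraph p E1 \<and> digraph p E2 \<and> (\<not> acyclic E1 \<or> \<not> acyclic E2) \<and>
            skeleton p E1 = skeleton p E2 \<and> Dsep p E1 \<noteq> Dsep p E2 \<and> Dsep p E1 \<subset> Dsep p E2"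
proof (intro exI conjI)
  have sub: "Dsep 4 Ex1 \<subseteq> Dsep 4 Ex2" by (rule dsep_mono) (auto simp: Ex1_def Ex2_def)
  have "(3,4,{}) \<in> Dsep 4 Ex2" unfolding Dsep_def using ex_sep2 by simp
  moreover have "(3,4,{}) \<notin> Dsep 4 Ex1" unfolding Dsep_def using ex_conn1 by simp
  ultimately have ne: "Dsep 4 Ex1 \<noteq> Dsep 4 Ex2" by blast
  show "digraph 4 Ex1" "digraph 4 Ex2" by (rule ex_dg)+
  show "\<not> acyclic Ex1 \<or> \<not> acyclic Ex2" using ex_cyc by simp
  show "skeleton 4 Ex1 = skeleton 4 Ex2" by (rule ex_skel)
  show "Dsep 4 Ex1 \<noteq> Dsep 4 Ex2" by (rule ne)
  show "Dsep 4 Ex1 \<subset> Dsep 4 Ex2" using sub ne by blast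
qed


fun triples :: "'a list \<Rightarrow> ('a \<times> 'a \<times> 'a) list" where
  "triples (a # b # c # xs) = (a, b, c) # triples (b # c # xs)"
| "triples _ = []"

lemma triples_nth:
  "(a,b,c) \<in> set (triples xs) \<longleftrightarrow>
   (\<exists>i. Suc (Suc i) < length xs \<and> xs!i = a \<and> xs!Suc i = b \<and> xs!Suc (Suc i) = c)"
proof (induction xs rule: triples.induct)
  case (1 a' b' c' xs)
  have "(\<exists>i. Suc (Suc i) < length (a'#b'#c'#xs) \<and> (a'#b'#c'#xs)!i = a \<and>
          (a'#b'#c'#xs)!Suc i = b \<and> (a'#b'#c'#xs)!Suc (Suc i) = c) \<longleftrightarrow>
        (a = a' \<and> b = b' \<and> c = c') \<or>
        (\<exists>j. Suc (Suc j) < length (b'#c'#xs) \<and> (b'#c'#xs)!j = a \<and>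
          (b'#c'#xs)!Suc j = b \<and> (b'#c'#xs)!Suc (Suc j) = c)" (is "?L \<longleftrightarrow> ?R")
  proof
    assume ?L
    then obtain i where i: "Suc (Suc i) < length (a'#b'#c'#xs)" "(a'#b'#c'#xs)!i = a"
      "(a'#b'#c'#xs)!Suc i = b" "(a'#b'#c'#xs)!Suc (Suc i) = c" by blast
    show ?R
    proof (cases i)
      case 0 then show ?thesis using i by simp
    next
      case (Suc j) then show ?thesis using i by (intro disjI2 exI[of _ j]) simp
    qed
  next
    assume ?R
    then show ?L
    proof
      assume "a = a' \<and> b = b' \<and> c = c'" then show ?L by (intro exI[of _ 0]) auto
    next
      assume "\<exists>j. Suc (Suc j) < length (b'#c'#xs) \<and> (b'#c'#xs)!j = a \<and>
          (b'#c'#xs)!Suc j = b \<and> (b'#c'#xs)!Suc (Suc j) = c"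
      then obtain j where "Suc (Suc j) < length (b'#c'#xs)" "(b'#c'#xs)!j = a"
          "(b'#c'#xs)!Suc j = b" "(b'#c'#xs)!Suc (Suc j) = c" by blast
      then show ?L by (intro exI[of _ "Suc j"]) simp
    qed
  qed
  then show ?case using 1 by simp
next
  case "2_1" then show ?case by simp
next
  case ("2_2" v) then show ?case by simp
next
  case ("2_3" v va) then show ?case by simp
qed

lemma triples_join:
  "set (triples (p @ u # v # q)) = set (triples (p @ [u])) \<union> set (triples (v # q)) \<union>
     (if p = [] then {} else {(last p, u, v)}) \<union> (if q = [] then {} else {(u, v, hd q)})"
proof (induction p rule: triples.induct)
  case (1 a b c xs)
  then show ?case by auto
next
  case "2_1" then show ?case by (cases q) auto
next
  case ("2_2" a) then show ?case by (cases q) auto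
next
  case ("2_3" a b) then show ?case by (cases q) auto
qed

lemma triples_cons2:
  "set (triples (a # b # q)) = set (triples (b # q)) \<union> (if q = [] then {} else {(a, b, hd q)})"
  by (cases q) auto

lemma triples_sub_left: "set (triples p) \<subseteq> set (triples (p @ q))"
proof
  fix t assume t: "t \<in> set (triples p)"
  obtain a b c where abc: "t = (a,b,c)" by (cases t) auto
  then obtain i where i: "Suc (Suc i) < length p" "p!i = a" "p!Suc i = b" "p!Suc (Suc i) = c"
    using t triples_nth[of a b c p] by auto
  then have "Suc (Suc i) < length (p@q) \<and> (p@q)!i = a \<and> (p@q)!Suc i = b \<and> (p@q)!Suc (Suc i) = c"
    by (auto simp: nth_append)
  then show "t \<in> set (triples (p @ q))" using abc triples_nth[of a b c "p@q"] by blast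
qed

lemma triples_sub_right: "set (triples q) \<subseteq> set (triples (p @ q))"
proof (induction p)
  case Nil then show ?case by simp
next
  case (Cons a p)
  have "set (triples (p @ q)) \<subseteq> set (triples (a # p @ q))"
    by (cases "p @ q" rule: triples.cases) auto
  then show ?case using Cons by auto
qed

lemma triples_decomp:
  "(a,b,c) \<in> set (triples zs) \<Longrightarrow> \<exists>p q. zs = p @ a # b # c # q"
proof (induction zs rule: triples.induct)
  case (1 a' b' c' xs)
  show ?case
  proof (cases "(a,b,c) = (a',b',c')")
    case True then show ?thesis by (intro exI[of _ "[]"] exI[of _ xs]) auto
  next
    case False
    then have "(a,b,c) \<in> set (triples (b'#c'#xs))" using 1 by auto
    then obtain p q where "b'#c'#xs = p @ a # b # c # q" using 1 by blast
    then show ?thesis by (intro exI[of _ "a'#p"] exI[of _ q]) simp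
  qed
qed auto

lemma triples_set: "(a,b,c) \<in> set (triples zs) \<Longrightarrow> a \<in> set zs \<and> b \<in> set zs \<and> c \<in> set zs"
  using triples_decomp by fastforce

lemma triples_succ: "successively R zs \<Longrightarrow> (a,b,c) \<in> set (triples zs) \<Longrightarrow> R a b \<and> R b c"
  by (induction zs rule: triples.induct) auto

lemma triples_mid_unique:
  assumes "distinct zs" "(a,b,c) \<in> set (triples zs)" "(a',b,c') \<in> set (triples zs)"
  shows "a = a' \<and> c = c'"
proof -
  obtain i where i: "Suc (Suc i) < length zs" "zs!i = a" "zs!Suc i = b" "zs!Suc (Suc i) = c"
    using assms(2) triples_nth by metis
  obtain i' where i': "Suc (Suc i') < length zs" "zs!i' = a'" "zs!Suc i' = b" "zs!Suc (Suc i') = c'"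
    using assms(3) triples_nth by metis
  have "Suc i = Suc i'" using i i' assms(1) nth_eq_iff_index_eq
    by (metis Suc_lessD)
  then show ?thesis using i i' by simp
qed

lemma triples_rev: "(a,b,c) \<in> set (triples (rev zs)) \<longleftrightarrow> (c,b,a) \<in> set (triples zs)"
proof
  assume "(a,b,c) \<in> set (triples (rev zs))"
  then obtain i where i: "Suc (Suc i) < length zs" "rev zs!i = a" "rev zs!Suc i = b"
    "rev zs!Suc (Suc i) = c" using triples_nth[of a b c "rev zs"] by auto
  define j where "j = length zs - Suc (Suc (Suc i))"
  have "zs ! j = c" "zs ! Suc j = b" "zs ! Suc (Suc j) = a" "Suc (Suc j) < length zs"
    using i by (auto simp: rev_nth j_def Suc_diff_Suc)
  then show "(c,b,a) \<in> set (triples zs)" unfolding triples_nth[of c b a zs] by blast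
next
  assume "(c,b,a) \<in> set (triples zs)"
  then obtain j where j: "Suc (Suc j) < length zs" "zs!j = c" "zs!Suc j = b" "zs!Suc (Suc j) = a"
    using triples_nth[of c b a zs] by auto
  define i where "i = length zs - Suc (Suc (Suc j))"
  have "rev zs ! i = a" "rev zs ! Suc i = b" "rev zs ! Suc (Suc i) = c" "Suc (Suc i) < length (rev zs)"
    using j by (auto simp: rev_nth i_def Suc_diff_Suc)
  then show "(a,b,c) \<in> set (triples (rev zs))" unfolding triples_nth[of a b c "rev zs"] by blast
qed


definition col :: "(nat \<times> nat) set \<Rightarrow> nat \<Rightarrow> nat \<Rightarrow> nat \<Rightarrow> bool" where
  "col E a b c \<longleftrightarrow> (a,b) \<in> E \<and> (c,b) \<in> E"
definition anS :: "(nat \<times> nat) set \<Rightarrow> nat set \<Rightarrow> nat set" where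
  "anS E S = {v. \<exists>d\<in>S. (v,d) \<in> E\<^sup>*}"
definition tk :: "(nat \<times> nat) set \<Rightarrow> nat set \<Rightarrow> nat \<Rightarrow> nat \<Rightarrow> nat \<Rightarrow> bool" where
  "tk E S a b c \<longleftrightarrow> (b \<in> S \<longrightarrow> col E a b c) \<and> (col E a b c \<longrightarrow> b \<in> anS E S)"
definition dp :: "(nat \<times> nat) set \<Rightarrow> nat set \<Rightarrow> nat list \<Rightarrow> bool" where
  "dp E S xs \<longleftrightarrow> xs \<noteq> [] \<and> distinct xs \<and> successively (really_adj E) xs \<and>
     (\<forall>a b c. (a,b,c) \<in> set (triples xs) \<longrightarrow> tk E S a b c)"
definition asy :: "(nat \<times> nat) set \<Rightarrow> bool" where
  "asy E \<longleftrightarrow> (\<forall>a b. (a,b) \<in> E \<longrightarrow> (b,a) \<notin> E)"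

lemma acyclic_asy: "acyclic E \<Longrightarrow> asy E"
  unfolding asy_def acyclic_def by (meson r_into_trancl' trancl_into_trancl)

lemma orient: "asy E \<Longrightarrow> e \<in> E \<Longrightarrow> e = (u,v) \<or> e = (v,u) \<Longrightarrow> (e = (u,v) \<longleftrightarrow> (u,v) \<in> E)"
  unfolding asy_def by auto

lemma collider_col:
  assumes "asy E" "upath E xs es" "0 < m" "m < length es"
  shows "collider xs es m \<longleftrightarrow> col E (xs!(m-1)) (xs!m) (xs!Suc m)"
proof -
  have m1: "m - 1 < length es" using assms(4) by simp
  have e1: "es!(m-1) \<in> E \<and> (es!(m-1) = (xs!(m-1), xs!Suc (m-1)) \<or> es!(m-1) = (xs!Suc (m-1), xs!(m-1)))"
    using assms(2) m1 unfolding upath_def by blast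
  have e2: "es!m \<in> E \<and> (es!m = (xs!m, xs!Suc m) \<or> es!m = (xs!Suc m, xs!m))"
    using assms(2,4) unfolding upath_def by blast
  have s: "Suc (m-1) = m" using assms(3) by simp
  have "es!(m-1) = (xs!(m-1), xs!m) \<longleftrightarrow> (xs!(m-1), xs!m) \<in> E"
    using orient[OF assms(1)] e1 s by metis
  moreover have "es!m = (xs!Suc m, xs!m) \<longleftrightarrow> (xs!Suc m, xs!m) \<in> E"
    using orient[OF assms(1)] e2 by metis
  ultimately show ?thesis unfolding collider_def col_def by simp
qed

lemma dconn_dp:
  assumes asy: "asy E" and d: "d_connected E j k S"
  shows "\<exists>xs. dp E S xs \<and> hd xs = j \<and> last xs = k"
proof -
  obtain xs es where up: "upath E xs es" and h: "hd xs = j" "last xs = k"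
    and C: "\<forall>i. 0 < i \<and> i < length es \<longrightarrow> (xs!i \<in> S \<longrightarrow> collider xs es i) \<and>
               (collider xs es i \<longrightarrow> (\<exists>d\<in>S. (xs!i,d) \<in> E\<^sup>*))"
    using d unfolding d_connected_def by blast
  have len: "length xs = Suc (length es)" using up unfolding upath_def by simp
  have sc: "successively (really_adj E) xs"
    unfolding successively_conv_nth
  proof (intro allI impI)
    fix i assume "Suc i < length xs"
    then have "i < length es" using len by simp
    then have "es!i \<in> E \<and> (es!i = (xs!i, xs!Suc i) \<or> es!i = (xs!Suc i, xs!i))"
      using up unfolding upath_def by blast
    then show "really_adj E (xs!i) (xs!Suc i)" unfolding really_adj_def by auto
  qed
  have tr: "tk E S a b c" if t: "(a,b,c) \<in> set (triples xs)" for a b c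
  proof -
    obtain i where i: "Suc (Suc i) < length xs" "xs!i = a" "xs!Suc i = b" "xs!Suc (Suc i) = c"
      using t triples_nth[of a b c xs] by blast
    have m: "0 < Suc i" "Suc i < length es" using i(1) len by auto
    have cc: "collider xs es (Suc i) \<longleftrightarrow> col E a b c"
      using collider_col[OF asy up m] i by simp
    have Ci: "(xs!Suc i \<in> S \<longrightarrow> collider xs es (Suc i)) \<and>
               (collider xs es (Suc i) \<longrightarrow> (\<exists>d\<in>S. (xs!Suc i,d) \<in> E\<^sup>*))"
      using C m by blast
    show ?thesis unfolding tk_def anS_def using Ci cc i(3) by simp
  qed
  have "dp E S xs" unfolding dp_def using up sc tr unfolding upath_def by blast
  then show ?thesis using h by blast
qed

lemma dp_dconn:
  assumes asy: "asy E" and d: "dp E S xs"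
  shows "d_connected E (hd xs) (last xs) S"
proof -
  define es where "es = map (\<lambda>i. if (xs!i, xs!Suc i) \<in> E then (xs!i, xs!Suc i) else (xs!Suc i, xs!i))
                   [0..<length xs - 1]"
  have ne: "xs \<noteq> []" and dist: "distinct xs" and sc: "successively (really_adj E) xs"
    and tr: "\<And>a b c. (a,b,c) \<in> set (triples xs) \<Longrightarrow> tk E S a b c"
    using d unfolding dp_def by blast+
  have len: "length es + 1 = length xs" using ne unfolding es_def by simp
  have ed: "es!i \<in> E \<and> (es!i = (xs!i, xs!Suc i) \<or> es!i = (xs!Suc i, xs!i))" if "i < length es" for i
  proof -
    have "really_adj E (xs!i) (xs!Suc i)" using successively_nth[OF sc] that len by simp
    then show ?thesis using that unfolding es_def really_adj_def by auto
  qed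
  have up: "upath E xs es" unfolding upath_def using ne dist len ed by blast
  have C: "(xs!m \<in> S \<longrightarrow> collider xs es m) \<and> (collider xs es m \<longrightarrow> (\<exists>d\<in>S. (xs!m,d) \<in> E\<^sup>*))"
    if m: "0 < m" "m < length es" for m
  proof -
    have t: "(xs!(m-1), xs!m, xs!Suc m) \<in> set (triples xs)"
      unfolding triples_nth using m len by (intro exI[of _ "m-1"]) auto
    have cc: "collider xs es m \<longleftrightarrow> col E (xs!(m-1)) (xs!m) (xs!Suc m)"
      using collider_col[OF asy up m] .
    show ?thesis using tr[OF t] cc unfolding tk_def anS_def by simp
  qed
  show ?thesis unfolding d_connected_def using up C by blast
qed

lemma dp_rev: "dp E S (rev xs) \<longleftrightarrow> dp E S xs"
proof -
  have ra: "really_adj E a b \<longleftrightarrow> really_adj E b a" for a b unfolding really_adj_def by auto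
  have tks: "tk E S a b c \<longleftrightarrow> tk E S c b a" for a b c unfolding tk_def col_def by auto
  have "successively (really_adj E) (rev xs) \<longleftrightarrow> successively (really_adj E) xs"
    by (simp add: ra)
  moreover have "(\<forall>a b c. (a,b,c) \<in> set (triples (rev xs)) \<longrightarrow> tk E S a b c) \<longleftrightarrow>
                 (\<forall>a b c. (a,b,c) \<in> set (triples xs) \<longrightarrow> tk E S a b c)"
    unfolding triples_rev using tks by metis
  ultimately show ?thesis unfolding dp_def by simp
qed


lemma succ_split: "successively R (p @ u # r) \<longleftrightarrow> successively R (p @ [u]) \<and> successively R (u # r)"
  by (auto simp: successively_append_iff)

lemma not_succ: "\<not> successively R xs \<Longrightarrow> \<exists>p u v q. xs = p @ u # v # q \<and> \<not> R u v"
proof (induction xs)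
  case Nil then show ?case by simp
next
  case (Cons a xs)
  show ?case
  proof (cases xs)
    case Nil then show ?thesis using Cons by simp
  next
    case (Cons b xs')
    show ?thesis
    proof (cases "R a b")
      case True
      then have "\<not> successively R xs" using Cons.prems Cons by simp
      then obtain p u v q where "xs = p @ u # v # q" "\<not> R u v" using Cons.IH by blast
      then show ?thesis by (intro exI[of _ "a#p"] exI[of _ u] exI[of _ v] exI[of _ q]) simp
    next
      case False
      then show ?thesis using Cons by (intro exI[of _ "[]"] exI[of _ a] exI[of _ b] exI[of _ xs']) simp
    qed
  qed
qed

context
  fixes E :: "(nat \<times> nat) set" and x y :: nat and S :: "nat set"
  assumes acy: "acyclic E" and xy: "(x,y) \<in> E" and cov: "\<And>z. (z,y) \<in> E \<longleftrightarrow> (z = x \<or> (z,x) \<in> E)"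
begin

abbreviation Er where "Er \<equiv> insert (y,x) (E - {(x,y)})"

definition noxy :: "nat \<Rightarrow> nat \<Rightarrow> bool" where
  "noxy u v \<longleftrightarrow> \<not> (u = x \<and> v = y) \<and> \<not> (u = y \<and> v = x)"

lemma asyE: "asy E" using acy by (rule acyclic_asy)

lemma irr: "(a,a) \<notin> E"
  using acy unfolding acyclic_def by blast

lemma asyD: "(a,b) \<in> E \<Longrightarrow> (b,a) \<notin> E"
  using asyE unfolding asy_def by blast

lemma xny: "x \<noteq> y" using xy irr by blast

lemma Er_iff: "(u,v) \<in> Er \<longleftrightarrow> ((u,v) \<in> E \<and> (u,v) \<noteq> (x,y)) \<or> (u,v) = (y,x)"
  by auto

lemma ra_eq: "really_adj Er = really_adj E"
  unfolding really_adj_def using xy by (intro ext) auto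

lemma edge_same: "noxy u v \<Longrightarrow> ((u,v) \<in> Er \<longleftrightarrow> (u,v) \<in> E)"
  unfolding noxy_def by auto

lemma noxy_sym: "noxy u v \<longleftrightarrow> noxy v u"
  unfolding noxy_def by auto

lemma an_aux:
  assumes "(v,d) \<in> E\<^sup>*"
  shows "(v \<noteq> x \<longrightarrow> (v,d) \<in> Er\<^sup>*) \<and> (v = x \<longrightarrow> (x,d) \<in> Er\<^sup>* \<or> (y,d) \<in> Er\<^sup>*)"
  using assms
proof (induction rule: converse_rtrancl_induct)
  case base then show ?case by simp
next
  case (step v w)
  note IH = step.IH
  show ?case
  proof (intro conjI impI)
    assume vx: "v \<noteq> x"
    show "(v,d) \<in> Er\<^sup>*"
    proof (cases "w = x")
      case False
      have "(v,w) \<in> Er" using step(1) vx by auto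
      moreover have "(w,d) \<in> Er\<^sup>*" using IH False by blast
      ultimately show ?thesis by (rule converse_rtrancl_into_rtrancl)
    next
      case True
      then have vy: "(v,y) \<in> E" using step(1) cov by blast
      then have vyr: "(v,y) \<in> Er" using vx by auto
      have "(x,d) \<in> Er\<^sup>* \<or> (y,d) \<in> Er\<^sup>*" using IH True by blast
      then show ?thesis
      proof
        assume "(y,d) \<in> Er\<^sup>*" then show ?thesis by (rule converse_rtrancl_into_rtrancl[OF vyr])
      next
        assume "(x,d) \<in> Er\<^sup>*"
        then have "(y,d) \<in> Er\<^sup>*" by (rule converse_rtrancl_into_rtrancl[rotated]) simp
        then show ?thesis by (rule converse_rtrancl_into_rtrancl[OF vyr])
      qed
    qed
  next
    assume vx: "v = x"
    show "(x,d) \<in> Er\<^sup>* \<or> (y,d) \<in> Er\<^sup>*"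
    proof (cases "w = y")
      case True
      then have "(y,d) \<in> Er\<^sup>*" using IH xny by blast
      then show ?thesis by blast
    next
      case False
      have wx: "w \<noteq> x" using step(1) vx irr by blast
      have "(x,w) \<in> Er" using step(1) vx False by auto
      moreover have "(w,d) \<in> Er\<^sup>*" using IH wx by blast
      ultimately show ?thesis by (blast intro: converse_rtrancl_into_rtrancl)
    qed
  qed
qed

lemma an_trans: "v \<noteq> x \<Longrightarrow> v \<in> anS E S \<Longrightarrow> v \<in> anS Er S"
  unfolding anS_def using an_aux by blast

lemma an_transx: "x \<in> anS E S \<Longrightarrow> y \<in> anS Er S"
proof -
  assume "x \<in> anS E S"
  then obtain d where d: "d \<in> S" "(x,d) \<in> E\<^sup>*" unfolding anS_def by blast
  have "(x,d) \<in> Er\<^sup>* \<or> (y,d) \<in> Er\<^sup>*" using an_aux[OF d(2)] by blast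
  then have "(y,d) \<in> Er\<^sup>*"
  proof
    assume "(x,d) \<in> Er\<^sup>*"
    then show ?thesis by (rule converse_rtrancl_into_rtrancl[rotated]) simp
  qed
  then show ?thesis using d(1) unfolding anS_def by blast
qed

lemma tk_xs:
  assumes "tk E S a b c" "noxy a b" "noxy b c" "b = x \<longrightarrow> \<not> col E a b c \<or> x \<in> anS Er S"
  shows "tk Er S a b c"
proof -
  have "col Er a b c \<longleftrightarrow> col E a b c"
    unfolding col_def using edge_same assms(2,3) noxy_sym by metis
  then show ?thesis using assms(1,4) an_trans unfolding tk_def by metis
qed

lemma tk_nc: "b \<notin> S \<Longrightarrow> \<not> col Er a b c \<Longrightarrow> tk Er S a b c"
  unfolding tk_def by blast

lemma notS1: "tk E S a v w \<Longrightarrow> (v,w) \<in> E \<Longrightarrow> v \<notin> S"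
  unfolding tk_def col_def using asyD by blast

lemma notS2: "tk E S w v a \<Longrightarrow> (v,w) \<in> E \<Longrightarrow> v \<notin> S"
  unfolding tk_def col_def using asyD by blast

lemma dp_build:
  assumes "ys \<noteq> []" "distinct ys" "successively (really_adj E) ys"
    "\<And>a b c. (a,b,c) \<in> set (triples ys) \<Longrightarrow> tk Er S a b c"
  shows "dp Er S ys"
  unfolding dp_def ra_eq using assms by blast


lemma dpD:
  assumes "dp E S xs"
  shows "xs \<noteq> []" "distinct xs" "successively (really_adj E) xs"
    "\<And>a b c. (a,b,c) \<in> set (triples xs) \<Longrightarrow> tk E S a b c"
  using assms unfolding dp_def by blast+

lemma tk_far:
  assumes "tk E S a b c" "x \<notin> {a,b,c}" "y \<notin> {a,b,c}"
  shows "tk Er S a b c"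
  using assms by (intro tk_xs) (auto simp: noxy_def)

lemma L_II:
  assumes d: "dp E S (p @ u # x # w # q)" and yn: "y \<notin> set (p @ u # x # w # q)"
    and c: "col E u x w"
  shows "\<exists>ys. dp Er S ys \<and> hd ys = hd (p @ u # x # w # q) \<and> last ys = last (p @ u # x # w # q)"
proof -
  let ?xs = "p @ u # x # w # q" and ?ys = "p @ u # y # w # q"
  note D = dpD[OF d]
  have ux: "(u,x) \<in> E" "(w,x) \<in> E" using c unfolding col_def by auto
  then have uy: "(u,y) \<in> E" "(w,y) \<in> E" using cov by blast+
  have ne: "?ys \<noteq> []" by simp
  have dys: "distinct ?ys" using D(2) yn by auto
  have s1: "successively (really_adj E) (p @ [u])" "successively (really_adj E) (u # x # w # q)"
    using D(3) succ_split[of "really_adj E" p u "x # w # q"] by blast+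
  have s2: "successively (really_adj E) (w # q)" using s1(2) by simp
  have "successively (really_adj E) (u # y # w # q)"
    using s2 uy by (simp add: really_adj_def)
  then have scys: "successively (really_adj E) ?ys"
    using s1(1) succ_split[of "really_adj E" p u "y # w # q"] by blast
  have TY: "set (triples ?ys) = set (triples (p@[u])) \<union> set (triples (w#q)) \<union>
      (if p = [] then {} else {(last p, u, y)}) \<union> {(u,y,w)} \<union> (if q = [] then {} else {(y,w,hd q)})"
    using triples_join[of p u y "w#q"] triples_cons2[of y w q] by auto
  have TX: "set (triples ?xs) = set (triples (p@[u])) \<union> set (triples (w#q)) \<union>
      (if p = [] then {} else {(last p, u, x)}) \<union> {(u,x,w)} \<union> (if q = [] then {} else {(x,w,hd q)})"
    using triples_join[of p u x "w#q"] triples_cons2[of x w q] by auto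
  have xnp: "x \<notin> set (p @ [u])" "x \<notin> set (w # q)" using D(2) by auto
  have ynp: "y \<notin> set (p @ [u])" "y \<notin> set (w # q)" using yn by auto
  have xan: "x \<in> anS E S" using D(4)[of u x w] TX c unfolding tk_def by auto
  have tr: "tk Er S a b c" if t: "(a,b,c) \<in> set (triples ?ys)" for a b c
  proof -
    consider (L) "(a,b,c) \<in> set (triples (p@[u]))" | (R) "(a,b,c) \<in> set (triples (w#q))"
      | (J1) "p \<noteq> []" "(a,b,c) = (last p, u, y)" | (J2) "(a,b,c) = (u,y,w)"
      | (J3) "q \<noteq> []" "(a,b,c) = (y,w,hd q)"
      using t TY by (auto split: if_splits)
    then show ?thesis
    proof cases
      case L
      have "tk E S a b c" using D(4) L TX by blast
      moreover have "a \<in> set (p@[u]) \<and> b \<in> set (p@[u]) \<and> c \<in> set (p@[u])" using triples_set[OF L] .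
      ultimately show ?thesis using xnp ynp by (intro tk_far) auto
    next
      case R
      have "tk E S a b c" using D(4) R TX by blast
      moreover have "a \<in> set (w#q) \<and> b \<in> set (w#q) \<and> c \<in> set (w#q)" using triples_set[OF R] .
      ultimately show ?thesis using xnp ynp by (intro tk_far) auto
    next
      case J1
      have "tk E S (last p) u x" using D(4) TX J1(1) by auto
      then have "u \<notin> S" using notS1 ux(1) by blast
      moreover have "\<not> col Er (last p) u y" unfolding col_def using uy(1) asyD ux(1) irr by auto
      ultimately show ?thesis using J1 tk_nc by simp
    next
      case J2
      have "col Er u y w" unfolding col_def using uy ux irr by auto
      moreover have "y \<in> anS Er S" using an_transx xan by blast
      ultimately show ?thesis using J2 unfolding tk_def by simp
    next
      case J3
      have "tk E S x w (hd q)" using D(4) TX J3(1) by auto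
      then have "w \<notin> S" using notS2 ux(2) by blast
      moreover have "\<not> col Er y w (hd q)" unfolding col_def using uy(2) asyD ux(2) irr by auto
      ultimately show ?thesis using J3 tk_nc by simp
    qed
  qed
  have "dp Er S ?ys" using dp_build[OF ne dys scys] tr by blast
  moreover have "hd ?ys = hd ?xs" by (cases p) auto
  moreover have "last ?ys = last ?xs" by (cases q) auto
  ultimately show ?thesis by blast
qed


lemma tk_nox:
  assumes "tk E S a b c" "x \<notin> {a,b,c}"
  shows "tk Er S a b c"
  using assms by (intro tk_xs) (auto simp: noxy_def)

lemma tk_noy:
  assumes "tk E S a b c" "y \<notin> {a,b,c}" "b = x \<longrightarrow> \<not> col E a b c \<or> x \<in> anS Er S"
  shows "tk Er S a b c"
  using assms by (intro tk_xs) (auto simp: noxy_def)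

lemma L_III:
  assumes d: "dp E S (p @ u # x # m @ y # q)" and mne: "m \<noteq> []"
    and c: "col E u x (hd m)"
  shows "\<exists>ys. dp Er S ys \<and> hd ys = hd (p @ u # x # m @ y # q) \<and> last ys = last (p @ u # x # m @ y # q)"
proof -
  let ?xs = "p @ u # x # m @ y # q" and ?ys = "p @ u # y # q"
  note D = dpD[OF d]
  have ux: "(u,x) \<in> E" using c unfolding col_def by auto
  then have uy: "(u,y) \<in> E" using cov by blast
  have ne: "?ys \<noteq> []" by simp
  have dys: "distinct ?ys" using D(2) by auto
  have s1: "successively (really_adj E) (p @ [u])"
    using D(3) succ_split[of "really_adj E" p u "x # m @ y # q"] by blast
  have s2: "successively (really_adj E) (y # q)"
    using D(3) succ_split[of "really_adj E" "p @ u # x # m" y q] by auto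
  have "successively (really_adj E) (u # y # q)"
    using s2 uy by (simp add: really_adj_def)
  then have scys: "successively (really_adj E) ?ys"
    using s1 succ_split[of "really_adj E" p u "y # q"] by blast
  have TY: "set (triples ?ys) = set (triples (p@[u])) \<union> set (triples (y#q)) \<union>
      (if p = [] then {} else {(last p, u, y)}) \<union> (if q = [] then {} else {(u,y,hd q)})"
    using triples_join[of p u y q] by auto
  have TX1: "set (triples (p@[u])) \<subseteq> set (triples ?xs)"
    using triples_sub_left[of "p@[u]" "x # m @ y # q"] by simp
  have TX2: "set (triples (y#q)) \<subseteq> set (triples ?xs)"
    using triples_sub_right[of "y#q" "p @ u # x # m"] by simp
  have TX3: "p \<noteq> [] \<Longrightarrow> (last p, u, x) \<in> set (triples ?xs)"
    using triples_join[of p u x "m @ y # q"] by auto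
  have TX4: "(u, x, hd m) \<in> set (triples ?xs)"
    using triples_join[of p u x "m @ y # q"] mne by (cases m) auto
  have TX5: "q \<noteq> [] \<Longrightarrow> (last m, y, hd q) \<in> set (triples ?xs)"
  proof -
    assume qne: "q \<noteq> []"
    obtain m0 ml where m: "m = m0 @ [ml]" using mne by (cases m rule: rev_cases) auto
    have "(ml, y, hd q) \<in> set (triples ((p @ u # x # m0) @ ml # y # q))"
      unfolding triples_join[of "p @ u # x # m0" ml y q] using qne by simp
    then show ?thesis using m by simp
  qed
  have xnp: "x \<notin> set (p @ [u])" "x \<notin> set (y # q)" using D(2) xny by auto
  have xan: "x \<in> anS E S" using D(4)[OF TX4] c unfolding tk_def by auto
  have yan: "y \<in> anS Er S" using an_transx xan by blast
  have tr: "tk Er S a b c" if t: "(a,b,c) \<in> set (triples ?ys)" for a b c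
  proof -
    consider (L) "(a,b,c) \<in> set (triples (p@[u]))" | (R) "(a,b,c) \<in> set (triples (y#q))"
      | (J1) "p \<noteq> []" "(a,b,c) = (last p, u, y)" | (J2) "q \<noteq> []" "(a,b,c) = (u,y,hd q)"
      using t TY by (auto split: if_splits)
    then show ?thesis
    proof cases
      case L
      have "tk E S a b c" using D(4) L TX1 by blast
      then show ?thesis using triples_set[OF L] xnp by (intro tk_nox) auto
    next
      case R
      have "tk E S a b c" using D(4) R TX2 by blast
      then show ?thesis using triples_set[OF R] xnp by (intro tk_nox) auto
    next
      case J1
      have "tk E S (last p) u x" using D(4) TX3 J1(1) by blast
      then have "u \<notin> S" using notS1 ux by blast
      moreover have "\<not> col Er (last p) u y" unfolding col_def using uy asyD ux irr by auto
      ultimately show ?thesis using J1 tk_nc by simp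
    next
      case J2
      have hq: "hd q \<in> set q" using J2(1) by simp
      have hqx: "hd q \<noteq> x" using D(2) hq by auto
      have "tk E S (last m) y (hd q)" using D(4) TX5 J2(1) by blast
      then have "y \<in> S \<longrightarrow> (hd q, y) \<in> E" unfolding tk_def col_def by blast
      then have "y \<in> S \<longrightarrow> col Er u y (hd q)" unfolding col_def using uy hqx ux irr by auto
      then show ?thesis using J2 yan unfolding tk_def by simp
    qed
  qed
  have "dp Er S ?ys" using dp_build[OF ne dys scys] tr by blast
  moreover have "hd ?ys = hd ?xs" by (cases p) auto
  moreover have "last ?ys = last ?xs" by (cases q) auto
  ultimately show ?thesis by blast
qed


lemma L_IV:
  assumes d: "dp E S (p @ x # y # q)"
  shows "\<exists>ys. dp Er S ys \<and> hd ys = hd (p @ x # y # q) \<and> last ys = last (p @ x # y # q)"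
proof -
  let ?xs = "p @ x # y # q"
  note D = dpD[OF d]
  have TXj: "set (triples ?xs) = set (triples (p@[x])) \<union> set (triples (y#q)) \<union>
      (if p = [] then {} else {(last p, x, y)}) \<union> (if q = [] then {} else {(x,y,hd q)})"
    by (rule triples_join)
  have xnq: "x \<notin> set (y # q)" using D(2) xny by auto
  have ynp: "y \<notin> set (p @ [x])" using D(2) xny by auto
  have s0: "successively (really_adj E) (p @ [x])" "successively (really_adj E) (x # y # q)"
    using D(3) succ_split[of "really_adj E" p x "y # q"] by blast+
  have s1: "successively (really_adj E) (y # q)" using s0(2) by simp
  have lpn: "last p \<noteq> x \<and> last p \<noteq> y" if "p \<noteq> []"
    using that D(2) by (cases p rule: rev_cases) auto
  have hqn: "hd q \<noteq> x \<and> hd q \<noteq> y" if "q \<noteq> []"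
    using that D(2) by (cases q) auto
  have ralp: "really_adj E (last p) x" if "p \<noteq> []"
    using s0(1) that by (simp add: successively_append_iff)
  have rahq: "really_adj E y (hd q)" if "q \<noteq> []"
    using s1 that by (cases q) auto
  have TL: "tk Er S a b c" if t: "(a,b,c) \<in> set (triples (p@[x]))" for a b c
  proof -
    have tx: "(a,b,c) \<in> set (triples ?xs)" using t TXj by blast
    have abc: "a \<in> set (p@[x]) \<and> b \<in> set (p@[x]) \<and> c \<in> set (p@[x])" using triples_set[OF t] .
    have "b \<noteq> x"
    proof
      assume bx: "b = x"
      have pne: "p \<noteq> []" using t by (cases p) auto
      then have "(last p, x, y) \<in> set (triples ?xs)" using TXj by auto
      then have "c = y" using triples_mid_unique[OF D(2) tx] bx by blast
      then show False using abc ynp by blast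
    qed
    then show ?thesis using D(4)[OF tx] abc ynp by (intro tk_noy) auto
  qed
  have TR: "tk Er S a b c" if t: "(a,b,c) \<in> set (triples (y#q))" for a b c
  proof -
    have tx: "(a,b,c) \<in> set (triples ?xs)" using t TXj by blast
    show ?thesis using D(4)[OF tx] triples_set[OF t] xnq by (intro tk_nox) auto
  qed
  consider (P1) "p \<noteq> [] \<and> (last p, x) \<in> E"
    | (Q1) "\<not> (p \<noteq> [] \<and> (last p, x) \<in> E)" "q \<noteq> [] \<and> (hd q, y) \<in> E"
    | (Q2) "\<not> (p \<noteq> [] \<and> (last p, x) \<in> E)" "\<not> (q \<noteq> [] \<and> (hd q, y) \<in> E)" by blast
  then show ?thesis
  proof cases
    case P1
    obtain p' a where pa: "p = p' @ [a]" using P1 by (cases p rule: rev_cases) auto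
    have ax: "(a,x) \<in> E" using P1 pa by simp
    have ay: "(a,y) \<in> E" using cov ax by blast
    have an: "a \<noteq> x" "a \<noteq> y" using lpn P1 pa by auto
    let ?ys = "p' @ a # y # q"
    have TYj: "set (triples ?ys) = set (triples (p'@[a])) \<union> set (triples (y#q)) \<union>
      (if p' = [] then {} else {(last p', a, y)}) \<union> (if q = [] then {} else {(a,y,hd q)})"
      by (rule triples_join)
    have sub1: "set (triples (p'@[a])) \<subseteq> set (triples (p@[x]))"
      using triples_sub_left[of "p'@[a]" "[x]"] pa by simp
    have tr: "tk Er S a' b c" if t: "(a',b,c) \<in> set (triples ?ys)" for a' b c
    proof -
      consider (L) "(a',b,c) \<in> set (triples (p'@[a]))" | (R) "(a',b,c) \<in> set (triples (y#q))"
        | (J1) "p' \<noteq> []" "(a',b,c) = (last p', a, y)" | (J2) "q \<noteq> []" "(a',b,c) = (a,y,hd q)"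
        using t TYj by (auto split: if_splits)
      then show ?thesis
      proof cases
        case L then show ?thesis using TL sub1 by blast
      next
        case R then show ?thesis using TR by blast
      next
        case J1
        have "(last p', a, x) \<in> set (triples ?xs)"
          using triples_join[of p' a x "y # q"] J1(1) pa by auto
        then have "tk E S (last p') a x" using D(4) by blast
        then have "a \<notin> S" using notS1 ax by blast
        moreover have "\<not> col Er (last p') a y" unfolding col_def using ay asyD an by auto
        ultimately show ?thesis using J1 tk_nc by simp
      next
        case J2
        have "(x, y, hd q) \<in> set (triples ?xs)" using TXj J2(1) by auto
        then have tkx: "tk E S x y (hd q)" using D(4) by blast
        have hq: "hd q \<noteq> x" using hqn J2(1) by blast
        have "col Er a y (hd q) \<longleftrightarrow> col E x y (hd q)"
          unfolding col_def using ay xy an hq by auto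
        then show ?thesis using tkx J2 an_trans[of y] xny unfolding tk_def by auto
      qed
    qed
    have dys: "distinct ?ys" using D(2) pa by auto
    have "successively (really_adj E) (p' @ [a])" using s0(1) pa
      by (simp add: successively_append_iff)
    moreover have "successively (really_adj E) (a # y # q)" using s1 ay by (simp add: really_adj_def)
    ultimately have scys: "successively (really_adj E) ?ys"
      using succ_split[of "really_adj E" p' a "y # q"] by blast
    have "dp Er S ?ys" using dp_build[OF _ dys scys] tr by blast
    moreover have "hd ?ys = hd ?xs" using pa by (cases p') auto
    moreover have "last ?ys = last ?xs" by (cases q) auto
    ultimately show ?thesis by blast
  next
    case Q1
    obtain b q' where qb: "q = b # q'" using Q1(2) by (cases q) auto
    have by': "(b,y) \<in> E" using Q1(2) qb by simp
    have bn: "b \<noteq> x" "b \<noteq> y" using hqn Q1(2) qb by auto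
    have bx: "(b,x) \<in> E" using cov by' bn by blast
    have xlp: "(x, last p) \<in> E" if "p \<noteq> []"
      using ralp[OF that] Q1(1) that unfolding really_adj_def by blast
    let ?ys = "p @ x # b # q'"
    have TYj: "set (triples ?ys) = set (triples (p@[x])) \<union> set (triples (b#q')) \<union>
      (if p = [] then {} else {(last p, x, b)}) \<union> (if q' = [] then {} else {(x,b,hd q')})"
      by (rule triples_join)
    have sub2: "set (triples (b#q')) \<subseteq> set (triples (y#q))"
      using triples_sub_right[of "b#q'" "[y]"] qb by simp
    have tr: "tk Er S a' b' c" if t: "(a',b',c) \<in> set (triples ?ys)" for a' b' c
    proof -
      consider (L) "(a',b',c) \<in> set (triples (p@[x]))" | (R) "(a',b',c) \<in> set (triples (b#q'))"
        | (J1) "p \<noteq> []" "(a',b',c) = (last p, x, b)" | (J2) "q' \<noteq> []" "(a',b',c) = (x,b,hd q')"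
        using t TYj by (auto split: if_splits)
      then show ?thesis
      proof cases
        case L then show ?thesis using TL by blast
      next
        case R then show ?thesis using TR sub2 by blast
      next
        case J1
        have "(last p, x, y) \<in> set (triples ?xs)" using TXj J1(1) by auto
        then have "tk E S (last p) x y" using D(4) by blast
        then have "x \<notin> S" using notS1 xy by blast
        moreover have "\<not> col Er (last p) x b"
          unfolding col_def using xlp[OF J1(1)] asyD lpn J1(1) by auto
        ultimately show ?thesis using J1 tk_nc by simp
      next
        case J2
        have "(y, b, hd q') \<in> set (triples ?xs)"
          using TXj qb J2(1) by (cases q') auto
        then have "tk E S y b (hd q')" using D(4) by blast
        then have "b \<notin> S" using notS2 by' by blast
        moreover have "\<not> col Er x b (hd q')" unfolding col_def using bx asyD xny by auto
        ultimately show ?thesis using J2 tk_nc by simp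
      qed
    qed
    have dys: "distinct ?ys" using D(2) qb by auto
    have "successively (really_adj E) (x # b # q')" using s1 qb bx by (simp add: really_adj_def)
    then have scys: "successively (really_adj E) ?ys"
      using s0(1) succ_split[of "really_adj E" p x "b # q'"] by blast
    have "dp Er S ?ys" using dp_build[OF _ dys scys] tr by blast
    moreover have "hd ?ys = hd ?xs" by (cases p) auto
    moreover have "last ?ys = last ?xs" using qb by (cases q') auto
    ultimately show ?thesis by blast
  next
    case Q2
    have tr: "tk Er S a' b' c" if t: "(a',b',c) \<in> set (triples ?xs)" for a' b' c
    proof -
      consider (L) "(a',b',c) \<in> set (triples (p@[x]))" | (R) "(a',b',c) \<in> set (triples (y#q))"
        | (J1) "p \<noteq> []" "(a',b',c) = (last p, x, y)" | (J2) "q \<noteq> []" "(a',b',c) = (x,y,hd q)"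
        using t TXj by (auto split: if_splits)
      then show ?thesis
      proof cases
        case L then show ?thesis using TL by blast
      next
        case R then show ?thesis using TR by blast
      next
        case J1
        have "tk E S (last p) x y" using D(4) t J1 by simp
        then have "x \<notin> S" using notS1 xy by blast
        moreover have "\<not> col Er (last p) x y"
          unfolding col_def using Q2(1) J1(1) lpn by auto
        ultimately show ?thesis using J1 tk_nc by simp
      next
        case J2
        have tkx: "tk E S x y (hd q)" using D(4) t J2 by simp
        have "\<not> col E x y (hd q)" using Q2(2) J2(1) unfolding col_def by auto
        then have "y \<notin> S" using tkx unfolding tk_def by blast
        moreover have "\<not> col Er x y (hd q)" unfolding col_def using xny by auto
        ultimately show ?thesis using J2 tk_nc by simp
      qed
    qed
    have "dp Er S ?xs" using dp_build[OF _ D(2) D(3)] tr by blast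
    then show ?thesis by blast
  qed
qed


lemma L_good:
  assumes d: "dp E S xs" and nx: "successively noxy xs"
    and g: "\<forall>a c. (a,x,c) \<in> set (triples xs) \<longrightarrow> \<not> col E a x c \<or> x \<in> anS Er S"
  shows "dp Er S xs"
proof -
  note D = dpD[OF d]
  have "tk Er S a b c" if t: "(a,b,c) \<in> set (triples xs)" for a b c
  proof -
    have "noxy a b \<and> noxy b c" using triples_succ[OF nx t] .
    moreover have "b = x \<longrightarrow> \<not> col E a b c \<or> x \<in> anS Er S" using g t by blast
    ultimately show ?thesis using tk_xs D(4)[OF t] by blast
  qed
  then show ?thesis using dp_build[OF D(1) D(2) D(3)] by blast
qed

lemma cov_main:
  assumes d: "dp E S xs"
  shows "\<exists>ys. dp Er S ys \<and> hd ys = hd xs \<and> last ys = last xs"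
proof (cases "\<exists>p q. xs = p @ x # y # q")
  case True
  then obtain p q where "xs = p @ x # y # q" by blast
  then show ?thesis using L_IV d by blast
next
  case F1: False
  show ?thesis
  proof (cases "\<exists>p q. xs = p @ y # x # q")
    case True
    then obtain p q where xs: "xs = p @ y # x # q" by blast
    have rx: "rev xs = rev q @ x # y # rev p" using xs by simp
    have "dp E S (rev xs)" using d dp_rev by blast
    then obtain ys where ys: "dp Er S ys" "hd ys = hd (rev xs)" "last ys = last (rev xs)"
      using L_IV rx by metis
    have yne: "ys \<noteq> []" using ys(1) unfolding dp_def by blast
    have xne: "xs \<noteq> []" using d unfolding dp_def by blast
    have "dp Er S (rev ys)" using ys(1) dp_rev by blast
    moreover have "hd (rev ys) = hd xs" using ys(3) yne xne by (simp add: hd_rev last_rev)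
    moreover have "last (rev ys) = last xs" using ys(2) yne xne by (simp add: hd_rev last_rev)
    ultimately show ?thesis by blast
  next
    case F2: False
    have nx: "successively noxy xs"
    proof (rule ccontr)
      assume "\<not> successively noxy xs"
      then obtain p u v q where "xs = p @ u # v # q" "\<not> noxy u v" using not_succ by blast
      then show False using F1 F2 unfolding noxy_def by blast
    qed
    show ?thesis
    proof (cases "\<forall>a c. (a,x,c) \<in> set (triples xs) \<longrightarrow> \<not> col E a x c \<or> x \<in> anS Er S")
      case True
      then show ?thesis using L_good[OF d nx] by blast
    next
      case False
      then obtain a c where t: "(a,x,c) \<in> set (triples xs)" "col E a x c" by blast
      obtain p q where xs: "xs = p @ a # x # c # q" using triples_decomp[OF t(1)] by blast
      have nac: "a \<noteq> y" "c \<noteq> y" using triples_succ[OF nx t(1)] unfolding noxy_def by auto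
      show ?thesis
      proof (cases "y \<in> set xs")
        case False
        then show ?thesis using L_II d t(2) xs by blast
      next
        case True
        then have "y \<in> set p \<or> y \<in> set q" using xs nac xny by auto
        then show ?thesis
        proof
          assume "y \<in> set q"
          then obtain q1 q2 where "q = q1 @ y # q2" by (meson split_list)
          then have xs2: "xs = p @ a # x # (c # q1) @ y # q2" using xs by simp
          have "col E a x (hd (c # q1))" using t(2) by simp
          then show ?thesis using L_III[of p a "c # q1" q2] d xs2 by simp
        next
          assume "y \<in> set p"
          then obtain p1 p2 where "p = p1 @ y # p2" by (meson split_list)
          then have rx: "rev xs = rev q @ c # x # (a # rev p2) @ y # rev p1" using xs by simp
          have dr: "dp E S (rev xs)" using d dp_rev by blast
          have "col E c x (hd (a # rev p2))" using t(2) unfolding col_def by simp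
          then obtain ys where ys: "dp Er S ys" "hd ys = hd (rev xs)" "last ys = last (rev xs)"
            using L_III[of "rev q" c "a # rev p2" "rev p1"] dr rx by (metis list.distinct(1))
          have yne: "ys \<noteq> []" using ys(1) unfolding dp_def by blast
          have xne: "xs \<noteq> []" using d unfolding dp_def by blast
          have "dp Er S (rev ys)" using ys(1) dp_rev by blast
          moreover have "hd (rev ys) = hd xs" using ys(3) yne xne by (simp add: hd_rev last_rev)
          moreover have "last (rev ys) = last xs" using ys(2) yne xne by (simp add: hd_rev last_rev)
          ultimately show ?thesis by blast
        qed
      qed
    qed
  qed
qed

end

lemma cov_dconn:
  assumes acy: "acyclic E" and xy: "(x,y) \<in> E" and cov: "\<And>z. (z,y) \<in> E \<longleftrightarrow> (z = x \<or> (z,x) \<in> E)"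
    and acy': "acyclic (insert (y,x) (E - {(x,y)}))"
    and d: "d_connected E j k S"
  shows "d_connected (insert (y,x) (E - {(x,y)})) j k S"
proof -
  obtain xs where xs: "dp E S xs" "hd xs = j" "last xs = k"
    using dconn_dp[OF acyclic_asy[OF acy] d] by blast
  obtain ys where ys: "dp (insert (y,x) (E - {(x,y)})) S ys" "hd ys = j" "last ys = k"
    using cov_main[OF acy xy cov xs(1)] xs(2,3) by metis
  show ?thesis using dp_dconn[OF acyclic_asy[OF acy'] ys(1)] ys(2,3) by simp
qed


definition vs :: "(nat \<times> nat) set \<Rightarrow> nat \<Rightarrow> nat \<Rightarrow> nat \<Rightarrow> bool" where
  "vs E a b c \<longleftrightarrow> (a,b) \<in> E \<and> (c,b) \<in> E \<and> a \<noteq> c \<and> \<not> really_adj E a c"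

lemma acyc_cyc2: "acyclic E \<Longrightarrow> (a,b) \<in> E \<Longrightarrow> (b,a) \<in> E\<^sup>* \<Longrightarrow> False"
  unfolding acyclic_def by (meson rtrancl_into_trancl2)

lemma no_virtual:
  assumes a: "acyclic E" shows "\<not> virtually_adj E a b"
proof
  assume "virtually_adj E a b"
  then obtain l where l: "(a,l) \<in> E" "(b,l) \<in> E" "(l,a) \<in> E\<^sup>* \<or> (l,b) \<in> E\<^sup>*"
    unfolding virtually_adj_def by blast
  from l(3) show False
  proof
    assume "(l,a) \<in> E\<^sup>*" then show False by (rule acyc_cyc2[OF a l(1)])
  next
    assume "(l,b) \<in> E\<^sup>*" then show False by (rule acyc_cyc2[OF a l(2)])
  qed
qed

lemma ra_sym: "really_adj E a b \<longleftrightarrow> really_adj E b a"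
  unfolding really_adj_def by auto

lemma skel_adj:
  assumes dg1: "digraph p E1" and a1: "acyclic E1" and a2: "acyclic E2"
    and sk: "skeleton p E1 = skeleton p E2" and r: "really_adj E1 a b"
  shows "really_adj E2 a b"
proof -
  have ab: "a \<in> {1..p} \<and> b \<in> {1..p} \<and> a \<noteq> b"
    using r digraph_in[OF dg1] unfolding really_adj_def by blast
  then have "{a,b} \<in> skeleton p E1" using r unfolding skeleton_def by blast
  then have "{a,b} \<in> skeleton p E2" using sk by simp
  then obtain a' b' where "{a,b} = {a',b'}" "really_adj E2 a' b' \<or> virtually_adj E2 a' b'"
    unfolding skeleton_def by blast
  then have "{a,b} = {a',b'}" "really_adj E2 a' b'" using no_virtual[OF a2] by blast+
  then show ?thesis unfolding doubleton_eq_iff using ra_sym by metis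
qed

lemma dp3:
  assumes "asy E" "a \<noteq> b" "c \<noteq> b" "a \<noteq> c" "really_adj E a b" "really_adj E b c" "tk E S a b c"
  shows "d_connected E a c S"
proof -
  have "dp E S [a,b,c]" unfolding dp_def using assms by (auto simp: ra_sym)
  then show ?thesis using dp_dconn[OF assms(1)] by fastforce
qed

lemma vs_transfer:
  assumes dg1: "digraph p E1" and dg2: "digraph p E2" and a1: "acyclic E1" and a2: "acyclic E2"
    and adj: "\<And>u v. really_adj E1 u v \<longleftrightarrow> really_adj E2 u v"
    and inc: "Dsep p E1 \<subseteq> Dsep p E2"
  shows "vs E1 a b c \<longleftrightarrow> vs E2 a b c"
proof
  assume v: "vs E1 a b c"
  then have e: "(a,b) \<in> E1" "(c,b) \<in> E1" "a \<noteq> c" "\<not> really_adj E1 a c" unfolding vs_def by auto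
  have inV: "a \<in> {1..p}" "b \<in> {1..p}" "c \<in> {1..p}" "a \<noteq> b" "c \<noteq> b"
    using digraph_in[OF dg1 e(1)] digraph_in[OF dg1 e(2)] by auto
  let ?S = "SepSet p E1 a c"
  have "\<not> d_connected E1 a c ?S" using sep_nonadj[OF dg1 e(3,4) no_virtual[OF a1]] .
  moreover have "?S \<subseteq> {1..p} - {a,c}" unfolding SepSet_def by auto
  ultimately have "(a,c,?S) \<in> Dsep p E1" using inV e(3) unfolding Dsep_def by blast
  then have nd: "\<not> d_connected E2 a c ?S" using inc unfolding Dsep_def by blast
  have bS: "b \<notin> ?S"
  proof
    assume "b \<in> ?S"
    then have "(b,a) \<in> E1\<^sup>* \<or> (b,c) \<in> E1\<^sup>*" unfolding SepSet_def by blast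
    then show False
    proof
      assume "(b,a) \<in> E1\<^sup>*" then show False by (rule acyc_cyc2[OF a1 e(1)])
    next
      assume "(b,c) \<in> E1\<^sup>*" then show False by (rule acyc_cyc2[OF a1 e(2)])
    qed
  qed
  have r2: "really_adj E2 a b" "really_adj E2 b c" "\<not> really_adj E2 a c"
    using adj e unfolding really_adj_def by blast+
  show "vs E2 a b c"
  proof (rule ccontr)
    assume "\<not> vs E2 a b c"
    then have "\<not> col E2 a b c" using r2(3) e(3) unfolding vs_def col_def by blast
    then have "tk E2 ?S a b c" using bS unfolding tk_def by blast
    then have "d_connected E2 a c ?S"
      by (rule dp3[OF acyclic_asy[OF a2] inV(4) inV(5) e(3) r2(1) r2(2)])
    then show False using nd by blast
  qed
next
  assume v: "vs E2 a b c"
  then have e: "(a,b) \<in> E2" "(c,b) \<in> E2" "a \<noteq> c" "\<not> really_adj E2 a c" unfolding vs_def by auto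
  have inV: "a \<in> {1..p}" "b \<in> {1..p}" "c \<in> {1..p}" "a \<noteq> b" "c \<noteq> b"
    using digraph_in[OF dg2 e(1)] digraph_in[OF dg2 e(2)] by auto
  have na1: "\<not> really_adj E1 a c" using adj e(4) by blast
  show "vs E1 a b c"
  proof (rule ccontr)
    assume nv: "\<not> vs E1 a b c"
    have r1: "really_adj E1 a b" "really_adj E1 c b" using adj e unfolding really_adj_def by blast+
    have "(b,a) \<in> E1 \<or> (b,c) \<in> E1" using nv r1 na1 e(3) unfolding vs_def really_adj_def by blast
    let ?S = "SepSet p E1 a c"
    have bS: "b \<in> ?S" unfolding SepSet_def using inV \<open>(b,a) \<in> E1 \<or> (b,c) \<in> E1\<close> by auto
    have "\<not> d_connected E1 a c ?S" using sep_nonadj[OF dg1 e(3) na1 no_virtual[OF a1]] .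
    moreover have "?S \<subseteq> {1..p} - {a,c}" unfolding SepSet_def by auto
    ultimately have "(a,c,?S) \<in> Dsep p E1" using inV e(3) unfolding Dsep_def by blast
    then have nd: "\<not> d_connected E2 a c ?S" using inc unfolding Dsep_def by blast
    have tk2: "tk E2 ?S a b c" unfolding tk_def col_def anS_def using e bS by blast
    have ra2: "really_adj E2 a b" "really_adj E2 b c" using e unfolding really_adj_def by auto
    have "d_connected E2 a c ?S"
      by (rule dp3[OF acyclic_asy[OF a2] inV(4) inV(5) e(3) ra2(1) ra2(2) tk2])
    then show False using nd by blast
  qed
qed


lemma cyc2:
  assumes "acyclic E" "(a,b) \<in> E" "(b,a) \<in> E" shows False
  using acyc_cyc2[OF assms(1,2) r_into_rtrancl[OF assms(3)]] .

lemma cyc3: "acyclic E \<Longrightarrow> (a,b) \<in> E \<Longrightarrow> (b,c) \<in> E \<Longrightarrow> (c,a) \<in> E \<Longrightarrow> False"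
proof -
  assume a: "acyclic E" "(a,b) \<in> E" "(b,c) \<in> E" "(c,a) \<in> E"
  have "(b,a) \<in> E\<^sup>*" using converse_rtrancl_into_rtrancl[OF a(3) r_into_rtrancl[OF a(4)]] .
  then show False by (rule acyc_cyc2[OF a(1) a(2)])
qed

lemma find_cov:
  assumes fin: "finite E1" and a1: "acyclic E1" and a2: "acyclic E2"
    and adj: "\<And>u v. really_adj E1 u v \<longleftrightarrow> really_adj E2 u v"
    and vse: "\<And>a b c. vs E1 a b c \<longleftrightarrow> vs E2 a b c"
    and ne: "E1 - E2 \<noteq> {}"
  shows "\<exists>x y. (x,y) \<in> E1 \<and> (x,y) \<notin> E2 \<and> (\<forall>z. (z,y) \<in> E1 \<longleftrightarrow> (z = x \<or> (z,x) \<in> E1))"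
proof -
  let ?R = "E1 - E2"
  have rev2: "(b,a) \<in> E2" if "(a,b) \<in> ?R" for a b
  proof -
    have "really_adj E2 a b" using adj that unfolding really_adj_def by blast
    then show ?thesis using that unfolding really_adj_def by blast
  qed
  have wf1: "wf (E1\<^sup>+)" using wf_trancl[OF finite_acyclic_wf[OF fin a1]] .
  have wf2: "wf ((E1\<inverse>)\<^sup>+)" using wf_trancl[OF finite_acyclic_wf_converse[OF fin a1]] .
  have Hne: "snd ` ?R \<noteq> {}" using ne by blast
  obtain y where y: "y \<in> snd ` ?R" and ymin: "\<And>y'. (y',y) \<in> E1\<^sup>+ \<Longrightarrow> y' \<notin> snd ` ?R"
    using wfE_min'[OF wf1 Hne] by blast
  have Qne: "{x. (x,y) \<in> ?R} \<noteq> {}" using y by force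
  obtain x where x: "x \<in> {x. (x,y) \<in> ?R}" and xmax0: "\<And>x'. (x',x) \<in> (E1\<inverse>)\<^sup>+ \<Longrightarrow> x' \<notin> {x. (x,y) \<in> ?R}"
    using wfE_min'[OF wf2 Qne] by blast
  have xmax: "(z,y) \<notin> ?R" if "(x,z) \<in> E1\<^sup>+" for z
  proof -
    have "(z,x) \<in> (E1\<inverse>)\<^sup>+" using that by (simp add: trancl_converse)
    then show ?thesis using xmax0 by blast
  qed
  have xy1: "(x,y) \<in> E1" and xy2: "(x,y) \<notin> E2" using x by auto
  have yx2: "(y,x) \<in> E2" using rev2 x by blast
  have cov: "(z,y) \<in> E1 \<longleftrightarrow> (z = x \<or> (z,x) \<in> E1)" for z
  proof
    assume zy: "(z,y) \<in> E1"
    show "z = x \<or> (z,x) \<in> E1"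
    proof (cases "z = x")
      case True then show ?thesis by blast
    next
      case zx: False
      have "really_adj E1 z x"
      proof (rule ccontr)
        assume na: "\<not> really_adj E1 z x"
        then have "vs E1 x y z" unfolding vs_def using xy1 zy zx na ra_sym[of E1 x z] by blast
        then have "vs E2 x y z" using vse by blast
        then show False using xy2 unfolding vs_def by blast
      qed
      then have "(z,x) \<in> E1 \<or> (x,z) \<in> E1" unfolding really_adj_def by blast
      then show ?thesis
      proof
        assume xz: "(x,z) \<in> E1"
        show ?thesis
        proof (cases "(z,y) \<in> E2")
          case False
          then show ?thesis using xmax[of z] xz zy by blast
        next
          case True
          have "really_adj E2 x z" using adj xz unfolding really_adj_def by blast
          moreover have "(x,z) \<notin> E2" using cyc3[OF a2 _ True yx2] by blast
          ultimately have "(x,z) \<in> ?R" using xz unfolding really_adj_def by blast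
          then have "z \<in> snd ` ?R" by force
          moreover have "(z,y) \<in> E1\<^sup>+" using zy by blast
          ultimately show ?thesis using ymin by blast
        qed
      qed simp
    qed
  next
    assume "z = x \<or> (z,x) \<in> E1"
    then show "(z,y) \<in> E1"
    proof
      assume "z = x" then show ?thesis using xy1 by simp
    next
      assume zx: "(z,x) \<in> E1"
      have "(z,x) \<notin> ?R"
      proof
        assume "(z,x) \<in> ?R"
        then have "x \<in> snd ` ?R" by force
        moreover have "(x,y) \<in> E1\<^sup>+" using xy1 by blast
        ultimately show False using ymin by blast
      qed
      then have zx2: "(z,x) \<in> E2" using zx by blast
      have zny: "z \<noteq> y" using cyc2[OF a1 xy1] zx by blast
      have "really_adj E1 z y"
      proof (rule ccontr)
        assume na: "\<not> really_adj E1 z y"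
        then have "\<not> really_adj E2 z y" using adj by blast
        then have "vs E2 z x y" unfolding vs_def using zx2 yx2 zny by blast
        then have "vs E1 z x y" using vse by blast
        then show False using cyc2[OF a1 xy1] unfolding vs_def by blast
      qed
      then show ?thesis using cyc3[OF a1 xy1 _ zx] unfolding really_adj_def by blast
    qed
  qed
  show ?thesis using xy1 xy2 cov by blast
qed

lemma rev_acyclic:
  assumes a: "acyclic E" and xy: "(x,y) \<in> E" and cov: "\<And>z. (z,y) \<in> E \<longleftrightarrow> (z = x \<or> (z,x) \<in> E)"
  shows "acyclic (insert (y,x) (E - {(x,y)}))"
proof -
  let ?F = "E - {(x,y)}"
  have aF: "acyclic ?F" using a by (rule acyclic_subset) blast
  have "(x,y) \<notin> ?F\<^sup>*"
  proof
    assume "(x,y) \<in> ?F\<^sup>*"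
    then show False
    proof (cases rule: rtranclE)
      case base then show False using xy a unfolding acyclic_def by blast
    next
      case (step w)
      then have wy: "(w,y) \<in> E" "w \<noteq> x" by auto
      then have wx: "(w,x) \<in> E" using cov by blast
      have "(x,w) \<in> E\<^sup>*" using step(1) rtrancl_mono[of ?F E] by blast
      then show False by (rule acyc_cyc2[OF a wx])
    qed
  qed
  then show ?thesis using aF by simp
qed

lemma rev_vs:
  assumes a: "acyclic E" and xy: "(x,y) \<in> E" and cov: "\<And>z. (z,y) \<in> E \<longleftrightarrow> (z = x \<or> (z,x) \<in> E)"
  shows "vs (insert (y,x) (E - {(x,y)})) u v w \<longleftrightarrow> vs E u v w"
proof -
  let ?E' = "insert (y,x) (E - {(x,y)})"
  have ra: "really_adj ?E' = really_adj E" by (rule ra_eq[OF a xy cov])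
  have xny: "x \<noteq> y" using xy a unfolding acyclic_def by blast
  show ?thesis
  proof
    assume v: "vs ?E' u v w"
    then have e: "(u,v) \<in> ?E'" "(w,v) \<in> ?E'" "u \<noteq> w" "\<not> really_adj E u w"
      unfolding vs_def ra by auto
    have "(u,v) \<noteq> (y,x)"
    proof
      assume uv: "(u,v) = (y,x)"
      then have "(w,x) \<in> E" using e(2,3) by auto
      then have "(w,y) \<in> E" using cov by blast
      then show False using e(4) uv unfolding really_adj_def by auto
    qed
    moreover have "(w,v) \<noteq> (y,x)"
    proof
      assume wv: "(w,v) = (y,x)"
      then have "(u,x) \<in> E" using e(1,3) by auto
      then have "(u,y) \<in> E" using cov by blast
      then show False using e(4) wv unfolding really_adj_def by auto
    qed
    ultimately show "vs E u v w" using e unfolding vs_def by auto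
  next
    assume v: "vs E u v w"
    then have e: "(u,v) \<in> E" "(w,v) \<in> E" "u \<noteq> w" "\<not> really_adj E u w"
      unfolding vs_def by auto
    have "(u,v) \<noteq> (x,y)"
    proof
      assume uv: "(u,v) = (x,y)"
      then have "(w,x) \<in> E" using e(2,3) cov by auto
      then show False using e(4) uv unfolding really_adj_def by auto
    qed
    moreover have "(w,v) \<noteq> (x,y)"
    proof
      assume wv: "(w,v) = (x,y)"
      then have "(u,x) \<in> E" using e(1,3) cov by auto
      then show False using e(4) wv unfolding really_adj_def by auto
    qed
    ultimately show "vs ?E' u v w" using e unfolding vs_def ra by auto
  qed
qed

lemma vp_main:
  assumes a2: "acyclic E2"
  shows "finite E1 \<Longrightarrow> acyclic E1 \<Longrightarrow> (\<forall>u v. really_adj E1 u v \<longleftrightarrow> really_adj E2 u v) \<Longrightarrow>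
    (\<forall>a b c. vs E1 a b c \<longleftrightarrow> vs E2 a b c) \<Longrightarrow> d_connected E1 j k S \<Longrightarrow> d_connected E2 j k S"
proof (induction "card (E1 - E2)" arbitrary: E1 rule: less_induct)
  case less
  show ?case
  proof (cases "E1 - E2 = {}")
    case True
    then have "E1 \<subseteq> E2" by blast
    then show ?thesis using dconn_mono less.prems(5) by blast
  next
    case False
    obtain x y where xy: "(x,y) \<in> E1" "(x,y) \<notin> E2" and cov: "\<forall>z. (z,y) \<in> E1 \<longleftrightarrow> (z = x \<or> (z,x) \<in> E1)"
      using find_cov[OF less.prems(1,2) a2 _ _ False] less.prems(3,4) by blast
    have cov': "\<And>z. (z,y) \<in> E1 \<longleftrightarrow> (z = x \<or> (z,x) \<in> E1)" using cov by blast
    let ?E' = "insert (y,x) (E1 - {(x,y)})"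
    have a': "acyclic ?E'" by (rule rev_acyclic[OF less.prems(2) xy(1) cov'])
    have fin': "finite ?E'" using less.prems(1) by simp
    have adj': "\<forall>u v. really_adj ?E' u v \<longleftrightarrow> really_adj E2 u v"
      using ra_eq[OF less.prems(2) xy(1) cov'] less.prems(3) by simp
    have vs': "\<forall>a b c. vs ?E' a b c \<longleftrightarrow> vs E2 a b c"
      using rev_vs[OF less.prems(2) xy(1) cov'] less.prems(4) by simp
    have "really_adj E2 x y" using less.prems(3) xy(1) unfolding really_adj_def by blast
    then have yx2: "(y,x) \<in> E2" using xy(2) unfolding really_adj_def by blast
    have eqd: "?E' - E2 = (E1 - E2) - {(x,y)}" using yx2 by blast
    have "finite (E1 - E2)" "(x,y) \<in> E1 - E2" using less.prems(1) xy by auto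
    then have "card ((E1 - E2) - {(x,y)}) < card (E1 - E2)" by (rule card_Diff1_less)
    then have "card (?E' - E2) < card (E1 - E2)" unfolding eqd .
    moreover have "d_connected ?E' j k S"
      by (rule cov_dconn[OF less.prems(2) xy(1) cov' a' less.prems(5)])
    ultimately show ?thesis using less.hyps[OF _ fin' a' adj' vs'] by blast
  qed
qed

theorem partC:
  "\<forall>p E1 E2. digraph p E1 \<and> digraph p E2 \<and> acyclic E1 \<and> acyclic E2 \<and>
            skeleton p E1 = skeleton p E2 \<longrightarrow>
            \<not> (Dsep p E1 \<noteq> Dsep p E2 \<and> Dsep p E1 \<subset> Dsep p E2)"
proof (intro allI impI notI)
  fix p E1 E2
  assume H: "digraph p E1 \<and> digraph p E2 \<and> acyclic E1 \<and> acyclic E2 \<and> skeleton p E1 = skeleton p E2"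
    and C: "Dsep p E1 \<noteq> Dsep p E2 \<and> Dsep p E1 \<subset> Dsep p E2"
  have dg1: "digraph p E1" and dg2: "digraph p E2" and a1: "acyclic E1" and a2: "acyclic E2"
    and sk: "skeleton p E1 = skeleton p E2" using H by blast+
  have inc: "Dsep p E1 \<subseteq> Dsep p E2" using C by blast
  have adj: "\<forall>u v. really_adj E1 u v \<longleftrightarrow> really_adj E2 u v"
    using skel_adj[OF dg1 a1 a2 sk] skel_adj[OF dg2 a2 a1 sk[symmetric]] by blast
  have vse: "\<forall>a b c. vs E1 a b c \<longleftrightarrow> vs E2 a b c"
    using vs_transfer[OF dg1 dg2 a1 a2 _ inc] adj by blast
  have fin: "finite E1"
    using dg1 unfolding digraph_def by (meson finite_SigmaI finite_atLeastAtMost finite_subset)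
  have "Dsep p E2 \<subseteq> Dsep p E1"
  proof
    fix t assume t: "t \<in> Dsep p E2"
    obtain j k S where tjk: "t = (j,k,S)" by (cases t) auto
    have "\<not> d_connected E2 j k S" using t tjk unfolding Dsep_def by blast
    then have "\<not> d_connected E1 j k S" using vp_main[OF a2 fin a1 adj vse] by blast
    then show "t \<in> Dsep p E1" using t tjk unfolding Dsep_def by blast
  qed
  then show False using C by blast
qed

theorem lemma2:
  shows "(\<forall>p E1 E2. digraph p E1 \<and> digraph p E2 \<and> Dsep p E1 \<subseteq> Dsep p E2
            \<longrightarrow> skeleton p E2 \<subseteq> skeleton p E1)
       \<and> (\<exists>p E1 E2. digraph p E1 \<and> digraph p E2 \<and> (\<not> acyclic E1 \<or> \<not> acyclic E2) \<and>
            skeleton p E1 = skeleton p E2 \<and> Dsep p E1 \<noteq> Dsep p E2 \<and> Dsep p E1 \<subset> Dsep p E2)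
       \<and> (\<forall>p E1 E2. digraph p E1 \<and> digraph p E2 \<and> acyclic E1 \<and> acyclic E2 \<and>
            skeleton p E1 = skeleton p E2 \<longrightarrow>
            \<not> (Dsep p E1 \<noteq> Dsep p E2 \<and> Dsep p E1 \<subset> Dsep p E2))"
  using partA partB partC by blast

end
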